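(* Let $\mathbf{C}$ and $\mathbf{D}$ be categories, and let $T\colon \mathbf{C}\to\mathbf{C}$ be a varietor that preserves reflexive coequalizers. Then for every monadic functor $G\colon \mathbf{C}\to\mathbf{D}$, the composite $\mathbf{Alg}(T)\xrightarrow{U}\mathbf{C}\xrightarrow{G}\mathbf{D}$ is monadic, where $U$ is the forgetful functor.
   Context: For an endofunctor $T\colon\mathbf{C}\to\mathbf{C}$, the category $\mathbf{Alg}(T)$ has as objects pairs $(X, a\colon TX\to X)$ and as morphisms $(X,a)\to(Y,b)$ the morphisms $h\colon X\to Y$ of $\mathbf{C}$ with $h\circ a = b\circ Th$; the forgetful functor $U\colon \mathbf{Alg}(T)\to\mathbf{C}$ sends $(X,a)$ to $X$ and $h$ to $h$. $T$ is called a varietor if $U$ has a left adjoint. A reflexive coequalizer is a coequalizer of a parallel pair $f,g\colon X\to Y$ having a common section $s\colon Y\to X$ (i.e. $f\circ s=g\circ s=1_Y$); $T$ preserves reflexive coequalizers if it sends such coequalizers to coequalizers. *)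

theory Defs
  imports Main
begin

record ('o, 'm) cat =
  Obj :: "'o set"
  Arr :: "'m set"
  Dom :: "'m \<Rightarrow> 'o"
  Cod :: "'m \<Rightarrow> 'o"
  Id  :: "'o \<Rightarrow> 'm"
  Comp :: "'m \<Rightarrow> 'm \<Rightarrow> 'm"   \<comment> \<open>Comp C g f = g o f\<close>

definition hom :: "('o, 'm) cat \<Rightarrow> 'o \<Rightarrow> 'o \<Rightarrow> 'm set" where
  "hom C X Y = {f \<in> Arr C. Dom C f = X \<and> Cod C f = Y}"

definition category :: "('o, 'm) cat \<Rightarrow> bool" where
  "category C \<longleftrightarrow>
     (\<forall>f\<in>Arr C. Dom C f \<in> Obj C \<and> Cod C f \<in> Obj C) \<and>
     (\<forall>X\<in>Obj C. Id C X \<in> hom C X X) \<and>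
     (\<forall>f\<in>Arr C. \<forall>g\<in>Arr C. Cod C f = Dom C g \<longrightarrow>
         Comp C g f \<in> hom C (Dom C f) (Cod C g)) \<and>
     (\<forall>f\<in>Arr C. Comp C (Id C (Cod C f)) f = f \<and> Comp C f (Id C (Dom C f)) = f) \<and>
     (\<forall>f\<in>Arr C. \<forall>g\<in>Arr C. \<forall>h\<in>Arr C. Cod C f = Dom C g \<longrightarrow> Cod C g = Dom C h \<longrightarrow>
         Comp C h (Comp C g f) = Comp C (Comp C h g) f)"

record ('o1, 'm1, 'o2, 'm2) func =
  omap :: "'o1 \<Rightarrow> 'o2"
  amap :: "'m1 \<Rightarrow> 'm2"

definition is_functor :: "('o1, 'm1) cat \<Rightarrow> ('o2, 'm2) cat \<Rightarrow> ('o1, 'm1, 'o2, 'm2) func \<Rightarrow> bool" where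
  "is_functor C D F \<longleftrightarrow> category C \<and> category D \<and>
     (\<forall>X\<in>Obj C. omap F X \<in> Obj D) \<and>
     (\<forall>f\<in>Arr C. amap F f \<in> hom D (omap F (Dom C f)) (omap F (Cod C f))) \<and>
     (\<forall>X\<in>Obj C. amap F (Id C X) = Id D (omap F X)) \<and>
     (\<forall>f\<in>Arr C. \<forall>g\<in>Arr C. Cod C f = Dom C g \<longrightarrow>
         amap F (Comp C g f) = Comp D (amap F g) (amap F f))"

definition id_functor :: "('o, 'm) cat \<Rightarrow> ('o, 'm, 'o, 'm) func" where
  "id_functor C = \<lparr>omap = (\<lambda>X. X), amap = (\<lambda>f. f)\<rparr>"

definition comp_functor :: "('o2, 'm2, 'o3, 'm3) func \<Rightarrow> ('o1, 'm1, 'o2, 'm2) func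
     \<Rightarrow> ('o1, 'm1, 'o3, 'm3) func" where
  "comp_functor G F = \<lparr>omap = omap G \<circ> omap F, amap = amap G \<circ> amap F\<rparr>"

definition nat_trans :: "('o1, 'm1) cat \<Rightarrow> ('o2, 'm2) cat \<Rightarrow> ('o1, 'm1, 'o2, 'm2) func
     \<Rightarrow> ('o1, 'm1, 'o2, 'm2) func \<Rightarrow> ('o1 \<Rightarrow> 'm2) \<Rightarrow> bool" where
  "nat_trans C D F G \<alpha> \<longleftrightarrow> is_functor C D F \<and> is_functor C D G \<and>
     (\<forall>X\<in>Obj C. \<alpha> X \<in> hom D (omap F X) (omap G X)) \<and>
     (\<forall>f\<in>Arr C. Comp D (\<alpha> (Cod C f)) (amap F f) = Comp D (amap G f) (\<alpha> (Dom C f)))"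

definition iso :: "('o, 'm) cat \<Rightarrow> 'm \<Rightarrow> bool" where
  "iso C f \<longleftrightarrow> f \<in> Arr C \<and> (\<exists>g\<in>hom C (Cod C f) (Dom C f).
      Comp C g f = Id C (Dom C f) \<and> Comp C f g = Id C (Cod C f))"

definition nat_iso :: "('o1, 'm1) cat \<Rightarrow> ('o2, 'm2) cat \<Rightarrow> ('o1, 'm1, 'o2, 'm2) func
     \<Rightarrow> ('o1, 'm1, 'o2, 'm2) func \<Rightarrow> ('o1 \<Rightarrow> 'm2) \<Rightarrow> bool" where
  "nat_iso C D F G \<alpha> \<longleftrightarrow> nat_trans C D F G \<alpha> \<and> (\<forall>X\<in>Obj C. iso D (\<alpha> X))"

definition equivalence :: "('o1, 'm1) cat \<Rightarrow> ('o2, 'm2) cat \<Rightarrow> ('o1, 'm1, 'o2, 'm2) func \<Rightarrow> bool" where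
  "equivalence A B K \<longleftrightarrow> is_functor A B K \<and>
     (\<exists>L :: ('o2, 'm2, 'o1, 'm1) func. is_functor B A L \<and>
        (\<exists>\<alpha>. nat_iso A A (id_functor A) (comp_functor L K) \<alpha>) \<and>
        (\<exists>\<beta>. nat_iso B B (comp_functor K L) (id_functor B) \<beta>))"

definition adjunction :: "('oc, 'mc) cat \<Rightarrow> ('od, 'md) cat \<Rightarrow> ('od, 'md, 'oc, 'mc) func
     \<Rightarrow> ('oc, 'mc, 'od, 'md) func \<Rightarrow> ('od \<Rightarrow> 'md) \<Rightarrow> ('oc \<Rightarrow> 'mc) \<Rightarrow> bool" where
  "adjunction C D F G \<eta> \<epsilon> \<longleftrightarrow> is_functor D C F \<and> is_functor C D G \<and>
     nat_trans D D (id_functor D) (comp_functor G F) \<eta> \<and>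
     nat_trans C C (comp_functor F G) (id_functor C) \<epsilon> \<and>
     (\<forall>X\<in>Obj D. Comp C (\<epsilon> (omap F X)) (amap F (\<eta> X)) = Id C (omap F X)) \<and>
     (\<forall>Y\<in>Obj C. Comp D (amap G (\<epsilon> Y)) (\<eta> (omap G Y)) = Id D (omap G Y))"

definition has_left_adjoint :: "('oc, 'mc) cat \<Rightarrow> ('od, 'md) cat \<Rightarrow> ('oc, 'mc, 'od, 'md) func \<Rightarrow> bool" where
  "has_left_adjoint C D G \<longleftrightarrow>
     (\<exists>(F :: ('od, 'md, 'oc, 'mc) func) \<eta> \<epsilon>. adjunction C D F G \<eta> \<epsilon>)"

definition Alg_cat :: "('o, 'm) cat \<Rightarrow> ('o, 'm, 'o, 'm) func
     \<Rightarrow> ('o \<times> 'm, ('o \<times> 'm) \<times> 'm \<times> ('o \<times> 'm)) cat" where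
  "Alg_cat C T =
    (let Ob = {(X, a). X \<in> Obj C \<and> a \<in> hom C (omap T X) X} in
     \<lparr>Obj = Ob,
      Arr = {(A, h, B). A \<in> Ob \<and> B \<in> Ob \<and> h \<in> hom C (fst A) (fst B) \<and>
                        Comp C h (snd A) = Comp C (snd B) (amap T h)},
      Dom = (\<lambda>(A, h, B). A),
      Cod = (\<lambda>(A, h, B). B),
      Id = (\<lambda>A. (A, Id C (fst A), A)),
      Comp = (\<lambda>(B', g, E) (A, f, B). (A, Comp C g f, E))\<rparr>)"

definition forget :: "('o, 'm) cat \<Rightarrow> ('o, 'm, 'o, 'm) func
     \<Rightarrow> ('o \<times> 'm, ('o \<times> 'm) \<times> 'm \<times> ('o \<times> 'm), 'o, 'm) func" where
  "forget C T = \<lparr>omap = fst, amap = (\<lambda>(A, h, B). h)\<rparr>"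

definition EM_cat :: "('o, 'm) cat \<Rightarrow> ('o, 'm, 'o, 'm) func \<Rightarrow> ('o \<Rightarrow> 'm) \<Rightarrow> ('o \<Rightarrow> 'm)
     \<Rightarrow> ('o \<times> 'm, ('o \<times> 'm) \<times> 'm \<times> ('o \<times> 'm)) cat" where
  "EM_cat D T \<eta> \<mu> =
    (let Ob = {(X, a). X \<in> Obj D \<and> a \<in> hom D (omap T X) X \<and>
                      Comp D a (\<eta> X) = Id D X \<and>
                      Comp D a (amap T a) = Comp D a (\<mu> X)} in
     \<lparr>Obj = Ob,
      Arr = {(A, h, B). A \<in> Ob \<and> B \<in> Ob \<and> h \<in> hom D (fst A) (fst B) \<and>
                        Comp D h (snd A) = Comp D (snd B) (amap T h)},
      Dom = (\<lambda>(A, h, B). A),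
      Cod = (\<lambda>(A, h, B). B),
      Id = (\<lambda>A. (A, Id D (fst A), A)),
      Comp = (\<lambda>(B', g, E) (A, f, B). (A, Comp D g f, E))\<rparr>)"

definition adj_mult :: "('od, 'md, 'oc, 'mc) func \<Rightarrow> ('oc, 'mc, 'od, 'md) func
     \<Rightarrow> ('oc \<Rightarrow> 'mc) \<Rightarrow> 'od \<Rightarrow> 'md" where
  "adj_mult F G \<epsilon> X = amap G (\<epsilon> (omap F X))"

definition comparison :: "('oc, 'mc) cat \<Rightarrow> ('oc, 'mc, 'od, 'md) func \<Rightarrow> ('oc \<Rightarrow> 'mc)
     \<Rightarrow> ('oc, 'mc, 'od \<times> 'md, ('od \<times> 'md) \<times> 'md \<times> ('od \<times> 'md)) func" where
  "comparison C G \<epsilon> =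
    (let K = (\<lambda>Y. (omap G Y, amap G (\<epsilon> Y))) in
     \<lparr>omap = K, amap = (\<lambda>f. (K (Dom C f), amap G f, K (Cod C f)))\<rparr>)"

definition monadic :: "('oc, 'mc) cat \<Rightarrow> ('od, 'md) cat \<Rightarrow> ('oc, 'mc, 'od, 'md) func \<Rightarrow> bool" where
  "monadic C D G \<longleftrightarrow>
     (\<exists>(F :: ('od, 'md, 'oc, 'mc) func) \<eta> \<epsilon>. adjunction C D F G \<eta> \<epsilon> \<and>
        equivalence C (EM_cat D (comp_functor G F) \<eta> (adj_mult F G \<epsilon>)) (comparison C G \<epsilon>))"

definition varietor :: "('o, 'm) cat \<Rightarrow> ('o, 'm, 'o, 'm) func \<Rightarrow> bool" where
  "varietor C T \<longleftrightarrow> is_functor C C T \<and> has_left_adjoint (Alg_cat C T) C (forget C T)"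

definition coequalizer :: "('o, 'm) cat \<Rightarrow> 'm \<Rightarrow> 'm \<Rightarrow> 'm \<Rightarrow> bool" where
  "coequalizer C f g q \<longleftrightarrow>
     f \<in> Arr C \<and> g \<in> Arr C \<and> Dom C f = Dom C g \<and> Cod C f = Cod C g \<and>
     q \<in> Arr C \<and> Dom C q = Cod C f \<and> Comp C q f = Comp C q g \<and>
     (\<forall>h\<in>Arr C. Dom C h = Cod C f \<and> Comp C h f = Comp C h g \<longrightarrow>
        (\<exists>!u. u \<in> hom C (Cod C q) (Cod C h) \<and> Comp C u q = h))"

definition reflexive_pair :: "('o, 'm) cat \<Rightarrow> 'm \<Rightarrow> 'm \<Rightarrow> bool" where
  "reflexive_pair C f g \<longleftrightarrow>
     f \<in> Arr C \<and> g \<in> Arr C \<and> Dom C f = Dom C g \<and> Cod C f = Cod C g \<and>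
     (\<exists>s\<in>hom C (Cod C f) (Dom C f).
        Comp C f s = Id C (Cod C f) \<and> Comp C g s = Id C (Cod C f))"

definition preserves_reflexive_coequalizers ::
    "('o1, 'm1) cat \<Rightarrow> ('o2, 'm2) cat \<Rightarrow> ('o1, 'm1, 'o2, 'm2) func \<Rightarrow> bool" where
  "preserves_reflexive_coequalizers C D T \<longleftrightarrow>
     (\<forall>f g q. reflexive_pair C f g \<and> coequalizer C f g q \<longrightarrow>
        coequalizer D (amap T f) (amap T g) (amap T q))"

end

theory Submission
  imports Defs
begin


lemma hom_iff: "f \<in> hom C X Y \<longleftrightarrow> f \<in> Arr C \<and> Dom C f = X \<and> Cod C f = Y"
  by (simp add: hom_def)

context fixes C :: "('o,'m) cat" assumes cat: "category C" begin

lemma cat_dom_obj: "f \<in> Arr C \<Longrightarrow> Dom C f \<in> Obj C"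
  using cat unfolding category_def by blast
lemma cat_cod_obj: "f \<in> Arr C \<Longrightarrow> Cod C f \<in> Obj C"
  using cat unfolding category_def by blast
lemma cat_id_arr: "X \<in> Obj C \<Longrightarrow> Id C X \<in> Arr C"
  using cat unfolding category_def hom_def by blast
lemma cat_id_dom: "X \<in> Obj C \<Longrightarrow> Dom C (Id C X) = X"
  using cat unfolding category_def hom_def by blast
lemma cat_id_cod: "X \<in> Obj C \<Longrightarrow> Cod C (Id C X) = X"
  using cat unfolding category_def hom_def by blast
lemma cat_comp_arr: "f \<in> Arr C \<Longrightarrow> g \<in> Arr C \<Longrightarrow> Cod C f = Dom C g \<Longrightarrow> Comp C g f \<in> Arr C"
  using cat unfolding category_def hom_def by blast
lemma cat_comp_dom: "f \<in> Arr C \<Longrightarrow> g \<in> Arr C \<Longrightarrow> Cod C f = Dom C g \<Longrightarrow> Dom C (Comp C g f) = Dom C f"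
  using cat unfolding category_def hom_def by blast
lemma cat_comp_cod: "f \<in> Arr C \<Longrightarrow> g \<in> Arr C \<Longrightarrow> Cod C f = Dom C g \<Longrightarrow> Cod C (Comp C g f) = Cod C g"
  using cat unfolding category_def hom_def by blast
lemma cat_idl: "f \<in> Arr C \<Longrightarrow> Cod C f = Y \<Longrightarrow> Comp C (Id C Y) f = f"
  using cat unfolding category_def by blast
lemma cat_idr: "f \<in> Arr C \<Longrightarrow> Dom C f = X \<Longrightarrow> Comp C f (Id C X) = f"
  using cat unfolding category_def by blast
lemma cat_assoc: "f \<in> Arr C \<Longrightarrow> g \<in> Arr C \<Longrightarrow> h \<in> Arr C \<Longrightarrow> Cod C f = Dom C g \<Longrightarrow> Cod C g = Dom C h
   \<Longrightarrow> Comp C (Comp C h g) f = Comp C h (Comp C g f)"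
  using cat unfolding category_def by metis

end

lemmas cs = cat_dom_obj cat_cod_obj cat_id_arr cat_id_dom cat_id_cod cat_comp_arr cat_comp_dom
  cat_comp_cod cat_idl cat_idr cat_assoc

context fixes C :: "('o1,'m1) cat" and D :: "('o2,'m2) cat" and F assumes F: "is_functor C D F" begin
lemma fun_cat1: "category C" using F unfolding is_functor_def by blast
lemma fun_cat2: "category D" using F unfolding is_functor_def by blast
lemma fun_obj: "X \<in> Obj C \<Longrightarrow> omap F X \<in> Obj D" using F unfolding is_functor_def by blast
lemma fun_arr: "f \<in> Arr C \<Longrightarrow> amap F f \<in> Arr D" using F unfolding is_functor_def hom_def by blast
lemma fun_dom: "f \<in> Arr C \<Longrightarrow> Dom D (amap F f) = omap F (Dom C f)" using F unfolding is_functor_def hom_def by blast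
lemma fun_cod: "f \<in> Arr C \<Longrightarrow> Cod D (amap F f) = omap F (Cod C f)" using F unfolding is_functor_def hom_def by blast
lemma fun_id: "X \<in> Obj C \<Longrightarrow> amap F (Id C X) = Id D (omap F X)" using F unfolding is_functor_def by blast
lemma fun_comp: "f \<in> Arr C \<Longrightarrow> g \<in> Arr C \<Longrightarrow> Cod C f = Dom C g \<Longrightarrow> amap F (Comp C g f) = Comp D (amap F g) (amap F f)"
  using F unfolding is_functor_def by blast
end

lemmas fs = fun_obj fun_arr fun_dom fun_cod fun_id fun_comp

lemma omap_comp[simp]: "omap (comp_functor G F) X = omap G (omap F X)" by (simp add: comp_functor_def)
lemma amap_comp[simp]: "amap (comp_functor G F) f = amap G (amap F f)" by (simp add: comp_functor_def)
lemma omap_id[simp]: "omap (id_functor C) X = X" by (simp add: id_functor_def)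
lemma amap_id[simp]: "amap (id_functor C) f = f" by (simp add: id_functor_def)

lemma is_functor_comp: "is_functor C D F \<Longrightarrow> is_functor D E G \<Longrightarrow> is_functor C E (comp_functor G F)"
proof -
  assume F: "is_functor C D F" and G: "is_functor D E G"
  show ?thesis unfolding is_functor_def hom_def
    using F G fun_cat1[OF F] fun_cat2[OF G] by (simp add: fs)
qed

lemma is_functor_id: "category C \<Longrightarrow> is_functor C C (id_functor C)"
  unfolding is_functor_def hom_def by (simp add: cs)

context fixes C :: "('o1,'m1) cat" and D :: "('o2,'m2) cat" and F G \<alpha> assumes a: "nat_trans C D F G \<alpha>" begin
lemma nt_F: "is_functor C D F" using a unfolding nat_trans_def by blast
lemma nt_G: "is_functor C D G" using a unfolding nat_trans_def by blast
lemma nt_arr: "X \<in> Obj C \<Longrightarrow> \<alpha> X \<in> Arr D" using a unfolding nat_trans_def hom_def by blast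
lemma nt_dom: "X \<in> Obj C \<Longrightarrow> Dom D (\<alpha> X) = omap F X" using a unfolding nat_trans_def hom_def by blast
lemma nt_cod: "X \<in> Obj C \<Longrightarrow> Cod D (\<alpha> X) = omap G X" using a unfolding nat_trans_def hom_def by blast
lemma nt_nat: "f \<in> Arr C \<Longrightarrow> Comp D (\<alpha> (Cod C f)) (amap F f) = Comp D (amap G f) (\<alpha> (Dom C f))"
  using a unfolding nat_trans_def by blast
end

lemmas ns = nt_arr nt_dom nt_cod

section \<open>Isomorphisms\<close>

definition inv :: "('o,'m) cat \<Rightarrow> 'm \<Rightarrow> 'm" where
  "inv C f = (SOME g. g \<in> hom C (Cod C f) (Dom C f) \<and> Comp C g f = Id C (Dom C f) \<and> Comp C f g = Id C (Cod C f))"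

lemma inv_props: assumes "iso C f"
  shows "inv C f \<in> Arr C" "Dom C (inv C f) = Cod C f" "Cod C (inv C f) = Dom C f"
   "Comp C (inv C f) f = Id C (Dom C f)" "Comp C f (inv C f) = Id C (Cod C f)"
proof -
  have "\<exists>g. g \<in> hom C (Cod C f) (Dom C f) \<and> Comp C g f = Id C (Dom C f) \<and> Comp C f g = Id C (Cod C f)"
    using assms unfolding iso_def by blast
  then have "inv C f \<in> hom C (Cod C f) (Dom C f) \<and> Comp C (inv C f) f = Id C (Dom C f) \<and> Comp C f (inv C f) = Id C (Cod C f)"
    unfolding inv_def by (rule someI_ex)
  then show "inv C f \<in> Arr C" "Dom C (inv C f) = Cod C f" "Cod C (inv C f) = Dom C f"
   "Comp C (inv C f) f = Id C (Dom C f)" "Comp C f (inv C f) = Id C (Cod C f)" by (auto simp: hom_def)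
qed

lemma reassoc: assumes "category C" "f \<in> Arr C" "g \<in> Arr C" "r \<in> Arr C" "Cod C r = Dom C f" "Cod C f = Dom C g"
  "Comp C g f = k" shows "Comp C g (Comp C f r) = Comp C k r"
  using cat_assoc[OF assms(1) assms(4) assms(2) assms(3) assms(5) assms(6)] assms(7) by simp

lemma reassoc3: assumes "category C" "f \<in> Arr C" "g \<in> Arr C" "h \<in> Arr C" "r \<in> Arr C" "Cod C r = Dom C f" "Cod C f = Dom C g"
  "Cod C g = Dom C h" "Comp C h (Comp C g f) = k" shows "Comp C h (Comp C g (Comp C f r)) = Comp C k r"
proof -
  have "Comp C k r = Comp C (Comp C h (Comp C g f)) r" using assms(9) by simp
  also have "\<dots> = Comp C h (Comp C (Comp C g f) r)" using assms(1-8) by (simp add: cat_assoc cs)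
  also have "\<dots> = Comp C h (Comp C g (Comp C f r))" using assms(1-8) by (simp add: cat_assoc cs)
  finally show ?thesis by simp
qed

lemma iso_arr: "iso C f \<Longrightarrow> f \<in> Arr C" by (simp add: iso_def)

lemma isoI: "f \<in> Arr C \<Longrightarrow> g \<in> Arr C \<Longrightarrow> Dom C g = Cod C f \<Longrightarrow> Cod C g = Dom C f \<Longrightarrow>
   Comp C g f = Id C (Dom C f) \<Longrightarrow> Comp C f g = Id C (Cod C f) \<Longrightarrow> iso C f"
  unfolding iso_def hom_def by blast

lemma inv_cancel1: assumes "category C" "iso C f" "r \<in> Arr C" "Cod C r = Dom C f"
  shows "Comp C (inv C f) (Comp C f r) = r"
  using inv_props[OF assms(2)] iso_arr[OF assms(2)] assms by (simp add: cs reassoc[of C f "inv C f"])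

lemma inv_cancel2: assumes "category C" "iso C f" "r \<in> Arr C" "Cod C r = Cod C f"
  shows "Comp C f (Comp C (inv C f) r) = r"
  using inv_props[OF assms(2)] iso_arr[OF assms(2)] assms by (simp add: cs reassoc[of C "inv C f" f])

lemma iso_inv_iso: assumes "category C" "iso C f" shows "iso C (inv C f)"
  using inv_props[OF assms(2)] iso_arr[OF assms(2)] by (intro isoI[of _ _ f]) auto

lemma iso_id: "category C \<Longrightarrow> X \<in> Obj C \<Longrightarrow> iso C (Id C X)"
  by (rule isoI[of _ _ "Id C X"]) (simp_all add: cs)

lemma iso_comp: assumes c: "category C" and f: "iso C f" and g: "iso C g" and e: "Cod C f = Dom C g"
  shows "iso C (Comp C g f)"
proof -
  note i1 = inv_props[OF f] and i2 = inv_props[OF g] and a = iso_arr[OF f] iso_arr[OF g]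
  have "Comp C (Comp C (inv C f) (inv C g)) (Comp C g f) = Id C (Dom C f)"
  proof -
    show ?thesis
      using a i1 i2 e c f g by (simp add: cs inv_cancel1)
  qed
  moreover have "Comp C (Comp C g f) (Comp C (inv C f) (inv C g)) = Id C (Cod C g)"
  proof -
    show ?thesis
      using a i1 i2 e c f g by (simp add: cs inv_cancel2)
  qed
  ultimately show ?thesis using a i1 i2 e c
    by (intro isoI[of _ _ "Comp C (inv C f) (inv C g)"]) (simp_all add: cs)
qed

lemma iso_cancel_r: assumes c: "category C" and f: "iso C f" and "u \<in> Arr C" "v \<in> Arr C"
  "Dom C u = Cod C f" "Dom C v = Cod C f" "Comp C u f = Comp C v f" shows "u = v"
proof -
  note i = inv_props[OF f] and a = iso_arr[OF f]
  have "u = Comp C (Comp C u f) (inv C f)" using assms(1-5) i a by (simp add: cs inv_cancel2)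
  also have "\<dots> = Comp C (Comp C v f) (inv C f)" using assms by simp
  also have "\<dots> = v" using assms(1-4,6) i a by (simp add: cs inv_cancel2)
  finally show ?thesis .
qed





lemma reassoc_eq: assumes "category C" "f \<in> Arr C" "g \<in> Arr C" "f' \<in> Arr C" "g' \<in> Arr C" "r \<in> Arr C"
  "Cod C r = Dom C f" "Cod C f = Dom C g" "Dom C f' = Dom C f" "Cod C f' = Dom C g'" "Comp C g f = Comp C g' f'"
  shows "Comp C g (Comp C f r) = Comp C g' (Comp C f' r)"
proof -
  have "Comp C g (Comp C f r) = Comp C (Comp C g f) r" using assms(1-8) by (simp add: cs)
  also have "\<dots> = Comp C (Comp C g' f') r" using assms(11) by simp
  also have "\<dots> = Comp C g' (Comp C f' r)" using assms(1-10) by (simp add: cs)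
  finally show ?thesis .
qed

lemma iso_cancel_l: assumes c: "category C" and f: "iso C f" and "u \<in> Arr C" "v \<in> Arr C"
  "Cod C u = Dom C f" "Cod C v = Dom C f" "Comp C f u = Comp C f v" shows "u = v"
proof -
  note i = inv_props[OF f] and a = iso_arr[OF f]
  have "u = Comp C (inv C f) (Comp C f u)" using assms(1-5) i a by (simp add: cs inv_cancel1)
  also have "\<dots> = Comp C (inv C f) (Comp C f v)" using assms by simp
  also have "\<dots> = v" using assms(1-4,6) i a by (simp add: cs inv_cancel1)
  finally show ?thesis .
qed

section \<open>Coequalizers\<close>

lemma coeq_arrs: assumes "coequalizer C f g q"
  shows "f \<in> Arr C" "g \<in> Arr C" "q \<in> Arr C" "Dom C f = Dom C g" "Cod C f = Cod C g"
    "Dom C q = Cod C f" "Comp C q f = Comp C q g"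
  using assms unfolding coequalizer_def by auto

lemma coeq_factor: assumes "coequalizer C f g q" "h \<in> Arr C" "Dom C h = Cod C f" "Comp C h f = Comp C h g"
  obtains u where "u \<in> Arr C" "Dom C u = Cod C q" "Cod C u = Cod C h" "Comp C u q = h"
  using assms unfolding coequalizer_def hom_def by blast

lemma coeq_epi: assumes c: "category C" and q: "coequalizer C f g q" and "u \<in> Arr C" "v \<in> Arr C"
  "Dom C u = Cod C q" "Dom C v = Cod C q" "Cod C u = Cod C v" "Comp C u q = Comp C v q"
  shows "u = v"
proof -
  note a = coeq_arrs[OF q]
  let ?h = "Comp C u q"
  have h: "?h \<in> Arr C" "Dom C ?h = Cod C f" using a assms c by (simp_all add: cs)
  have "Comp C ?h f = Comp C ?h g"
    using a assms c by (simp add: cs)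
  then have "\<exists>!w. w \<in> hom C (Cod C q) (Cod C ?h) \<and> Comp C w q = ?h"
    using q h unfolding coequalizer_def by blast
  moreover have "u \<in> hom C (Cod C q) (Cod C ?h)" "v \<in> hom C (Cod C q) (Cod C ?h)"
    using a assms c by (simp_all add: cs hom_def)
  ultimately show ?thesis using assms by metis
qed

lemma coeq_sym: "coequalizer C f g q \<Longrightarrow> coequalizer C g f q"
  unfolding coequalizer_def by metis

lemma coeq_iso: assumes c: "category C" and q: "coequalizer C f g q" and j: "iso C j" and d: "Dom C j = Cod C q"
  shows "coequalizer C f g (Comp C j q)"
proof -
  note a = coeq_arrs[OF q] and ji = inv_props[OF j] and ja = iso_arr[OF j]
  have 1: "Comp C j q \<in> Arr C" "Dom C (Comp C j q) = Cod C f" "Comp C (Comp C j q) f = Comp C (Comp C j q) g"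
    using a ja d c by (simp_all add: cs)
  show ?thesis unfolding coequalizer_def
  proof (intro conjI ballI impI)
    fix h assume h: "h \<in> Arr C" "Dom C h = Cod C f \<and> Comp C h f = Comp C h g"
    then obtain u where u: "u \<in> Arr C" "Dom C u = Cod C q" "Cod C u = Cod C h" "Comp C u q = h"
      using coeq_factor[OF q] by metis
    show "\<exists>!w. w \<in> hom C (Cod C (Comp C j q)) (Cod C h) \<and> Comp C w (Comp C j q) = h"
    proof
      show "Comp C u (inv C j) \<in> hom C (Cod C (Comp C j q)) (Cod C h) \<and> Comp C (Comp C u (inv C j)) (Comp C j q) = h"
        using u ji ja a c d j by (simp add: cs hom_def inv_cancel1)
    next
      fix w assume w: "w \<in> hom C (Cod C (Comp C j q)) (Cod C h) \<and> Comp C w (Comp C j q) = h"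
      have "Comp C w j = u"
        using coeq_epi[OF c q, of "Comp C w j" u] w u a ja d c by (simp add: cs hom_def)
      then show "w = Comp C u (inv C j)"
        using w ja ji a d c j by (auto simp add: cs hom_def inv_cancel2)
    qed
  qed (use a 1 in auto)
qed

lemma coeq_comparison_iso: assumes c: "category C" and q1: "coequalizer C f g q1" and q2: "coequalizer C f g q2"
  and "k \<in> Arr C" "Dom C k = Cod C q1" "Cod C k = Cod C q2" "Comp C k q1 = q2"
  shows "iso C k"
proof -
  note a1 = coeq_arrs[OF q1] and a2 = coeq_arrs[OF q2]
  obtain d where d: "d \<in> Arr C" "Dom C d = Cod C q2" "Cod C d = Cod C q1" "Comp C d q2 = q1"
    using coeq_factor[OF q2, of q1] a1 a2 by metis
  have "Comp C d k = Id C (Cod C q1)"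
    using coeq_epi[OF c q1, of "Comp C d k" "Id C (Cod C q1)"] d assms a1 a2 by (simp add: cs reassoc)
  moreover have "Comp C k d = Id C (Cod C q2)"
    using coeq_epi[OF c q2, of "Comp C k d" "Id C (Cod C q2)"] d assms a1 a2 by (simp add: cs reassoc)
  ultimately show ?thesis using d assms by (intro isoI[of _ _ d]) auto
qed

lemma split_coeq: assumes c: "category C" and "f \<in> hom C Xs Xt" "g \<in> hom C Xs Xt" "e \<in> hom C Xt Y"
  "s \<in> hom C Y Xt" "t \<in> hom C Xt Xs" "Comp C e f = Comp C e g" "Comp C e s = Id C Y"
  "Comp C g t = Id C Xt" "Comp C f t = Comp C s e"
  shows "coequalizer C f g e"
  unfolding coequalizer_def
proof (intro conjI ballI impI)
  fix h assume h: "h \<in> Arr C" "Dom C h = Cod C f \<and> Comp C h f = Comp C h g"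
  show "\<exists>!u. u \<in> hom C (Cod C e) (Cod C h) \<and> Comp C u e = h"
  proof
    have "Comp C (Comp C h s) e = Comp C h (Comp C s e)" using assms(1-6) h by (simp add: cs hom_def)
    also have "\<dots> = Comp C h (Comp C f t)" using assms(10) by simp
    also have "\<dots> = Comp C (Comp C h f) t" using assms(1-6) h by (intro cat_assoc[symmetric]) (auto simp: hom_def)
    also have "\<dots> = Comp C (Comp C h g) t" using h by simp
    also have "\<dots> = h" using assms(1-6,9) h by (simp add: cs hom_def)
    finally show "Comp C h s \<in> hom C (Cod C e) (Cod C h) \<and> Comp C (Comp C h s) e = h"
      using assms h by (simp add: cs hom_def)
  next
    fix u assume u: "u \<in> hom C (Cod C e) (Cod C h) \<and> Comp C u e = h"
    then have "u = Comp C u (Comp C e s)" using assms by (simp add: cs hom_def)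
    also have "\<dots> = Comp C (Comp C u e) s" using assms(1-6) u by (intro cat_assoc[symmetric]) (auto simp: hom_def)
    also have "\<dots> = Comp C h s" using u by simp
    finally show "u = Comp C h s" .
  qed
qed (use assms in \<open>auto simp: hom_def cs\<close>)



section \<open>Categories of algebras\<close>

definition tcat :: "('o \<times> 'm) set \<Rightarrow> ('o,'m) cat \<Rightarrow> ('o,'m,'o,'m) func \<Rightarrow> ('o \<times> 'm, ('o \<times> 'm) \<times> 'm \<times> ('o \<times> 'm)) cat" where
  "tcat Ob C T = \<lparr>Obj = Ob,
      Arr = {(A, h, B). A \<in> Ob \<and> B \<in> Ob \<and> h \<in> hom C (fst A) (fst B) \<and>
                        Comp C h (snd A) = Comp C (snd B) (amap T h)},
      Dom = (\<lambda>(A, h, B). A),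
      Cod = (\<lambda>(A, h, B). B),
      Id = (\<lambda>A. (A, Id C (fst A), A)),
      Comp = (\<lambda>(B', g, E) (A, f, B). (A, Comp C g f, E))\<rparr>"

lemma Alg_tcat: "Alg_cat C T = tcat {(X, a). X \<in> Obj C \<and> a \<in> hom C (omap T X) X} C T"
  by (simp add: Alg_cat_def tcat_def Let_def)

definition EMOb where "EMOb D T \<eta> \<mu> = {(X, a). X \<in> Obj D \<and> a \<in> hom D (omap T X) X \<and>
                      Comp D a (\<eta> X) = Id D X \<and> Comp D a (amap T a) = Comp D a (\<mu> X)}"

lemma EM_tcat: "EM_cat D T \<eta> \<mu> = tcat (EMOb D T \<eta> \<mu>) D T"
  by (simp add: EM_cat_def EMOb_def tcat_def Let_def)

lemma tcat_Obj[simp]: "Obj (tcat Ob C T) = Ob" by (simp add: tcat_def)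
lemma tcat_Arr_iff[simp]: "(A, h, B) \<in> Arr (tcat Ob C T) \<longleftrightarrow> A \<in> Ob \<and> B \<in> Ob \<and> h \<in> hom C (fst A) (fst B) \<and>
                        Comp C h (snd A) = Comp C (snd B) (amap T h)" by (simp add: tcat_def)
lemma tcat_Dom[simp]: "Dom (tcat Ob C T) (A, h, B) = A" by (simp add: tcat_def)
lemma tcat_Cod[simp]: "Cod (tcat Ob C T) (A, h, B) = B" by (simp add: tcat_def)
lemma tcat_Id[simp]: "Id (tcat Ob C T) A = (A, Id C (fst A), A)" by (simp add: tcat_def)
lemma tcat_Comp[simp]: "Comp (tcat Ob C T) (B', g, E) (A, f, B) = (A, Comp C g f, E)" by (simp add: tcat_def)

lemma tcat_arr_split: "x \<in> Arr (tcat Ob C T) \<Longrightarrow> \<exists>A h B. x = (A, h, B)" by (cases x) auto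

definition tob where "tob Ob C T \<longleftrightarrow> (\<forall>A\<in>Ob. fst A \<in> Obj C \<and> snd A \<in> hom C (omap T (fst A)) (fst A))"

lemma tob_Alg: "tob {(X, a). X \<in> Obj C \<and> a \<in> hom C (omap T X) X} C T" by (auto simp: tob_def)
lemma tob_EM: "tob (EMOb D T \<eta> \<mu>) D T" by (auto simp: tob_def EMOb_def)

lemma tobD: "tob Ob C T \<Longrightarrow> A \<in> Ob \<Longrightarrow> fst A \<in> Obj C \<and> snd A \<in> Arr C \<and> Dom C (snd A) = omap T (fst A) \<and> Cod C (snd A) = fst A"
  by (auto simp: tob_def hom_def)

lemma tcat_category: assumes c: "category C" and T: "is_functor C C T" and ob: "tob Ob C T"
  shows "category (tcat Ob C T)"
  unfolding category_def
proof (intro conjI ballI impI)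
  fix x assume "x \<in> Arr (tcat Ob C T)"
  then obtain A h B where x: "x = (A, h, B)" and "A \<in> Ob" "B \<in> Ob" by (cases x) auto
  then show "Dom (tcat Ob C T) x \<in> Obj (tcat Ob C T)" "Cod (tcat Ob C T) x \<in> Obj (tcat Ob C T)" by simp_all
next
  fix A assume A: "A \<in> Obj (tcat Ob C T)"
  note a = tobD[OF ob, of A]
  show "Id (tcat Ob C T) A \<in> hom (tcat Ob C T) A A"
    using A a c T by (simp add: hom_def cs fs)
next
  fix x y assume "x \<in> Arr (tcat Ob C T)" "y \<in> Arr (tcat Ob C T)" "Cod (tcat Ob C T) x = Dom (tcat Ob C T) y"
  then obtain A f B g E where x: "x = (A, f, B)" "y = (B, g, E)" and
    f: "A \<in> Ob" "B \<in> Ob" "f \<in> hom C (fst A) (fst B)" "Comp C f (snd A) = Comp C (snd B) (amap T f)"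
    and g: "E \<in> Ob" "g \<in> hom C (fst B) (fst E)" "Comp C g (snd B) = Comp C (snd E) (amap T g)"
    by (cases x, cases y) auto
  note a = tobD[OF ob f(1)] tobD[OF ob f(2)] tobD[OF ob g(1)]
  have "Comp C (Comp C g f) (snd A) = Comp C g (Comp C (snd B) (amap T f))"
    using a f g c by (simp add: cs hom_def)
  also have "\<dots> = Comp C (snd E) (Comp C (amap T g) (amap T f))"
    using a f g c T by (intro reassoc_eq) (auto simp: cs fs hom_def)
  also have "\<dots> = Comp C (snd E) (amap T (Comp C g f))"
    using a f g c T by (simp add: cs fs hom_def)
  finally show "Comp (tcat Ob C T) y x \<in> hom (tcat Ob C T) (Dom (tcat Ob C T) x) (Cod (tcat Ob C T) y)"
    using x f g c by (simp add: hom_def cs)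
next
  fix x assume "x \<in> Arr (tcat Ob C T)"
  then obtain A f B where x: "x = (A, f, B)" and
    f: "A \<in> Ob" "B \<in> Ob" "f \<in> hom C (fst A) (fst B)"
    by (cases x) auto
  show "Comp (tcat Ob C T) (Id (tcat Ob C T) (Cod (tcat Ob C T) x)) x = x" "Comp (tcat Ob C T) x (Id (tcat Ob C T) (Dom (tcat Ob C T) x)) = x"
    using x f c by (simp_all add: hom_def cs)
next
  fix x y z assume "x \<in> Arr (tcat Ob C T)" "y \<in> Arr (tcat Ob C T)" "z \<in> Arr (tcat Ob C T)"
    "Cod (tcat Ob C T) x = Dom (tcat Ob C T) y" "Cod (tcat Ob C T) y = Dom (tcat Ob C T) z"
  then obtain A f B g E h H where x: "x = (A, f, B)" "y = (B, g, E)" "z = (E, h, H)" and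
    "f \<in> hom C (fst A) (fst B)" "g \<in> hom C (fst B) (fst E)" "h \<in> hom C (fst E) (fst H)"
    by (cases x, cases y, cases z) auto
  then show "Comp (tcat Ob C T) z (Comp (tcat Ob C T) y x) = Comp (tcat Ob C T) (Comp (tcat Ob C T) z y) x"
    using c by (simp add: hom_def cs)
qed

lemma tcat_iso: assumes c: "category C" and T: "is_functor C C T" and ob: "tob Ob C T"
  and x: "(A, h, B) \<in> Arr (tcat Ob C T)" and i: "iso C h"
  shows "iso (tcat Ob C T) (A, h, B)"
proof -
  note hi = inv_props[OF i]
  have A: "A \<in> Ob" "B \<in> Ob" and h: "h \<in> hom C (fst A) (fst B)" and e: "Comp C h (snd A) = Comp C (snd B) (amap T h)"
    using x by auto
  note a = tobD[OF ob A(1)] tobD[OF ob A(2)]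
  have "Comp C (inv C h) (snd B) = Comp C (inv C h) (Comp C (snd B) (Comp C (amap T h) (amap T (inv C h))))"
    using hi h a c T i by (simp add: cs fs hom_def fun_comp[symmetric])
  also have "\<dots> = Comp C (inv C h) (Comp C h (Comp C (snd A) (amap T (inv C h))))"
    using hi h a c T e by (intro arg_cong[where f="Comp C (inv C h)"] reassoc_eq) (auto simp: cs fs hom_def)
  also have "\<dots> = Comp C (snd A) (amap T (inv C h))"
    using hi h a c T i by (simp add: cs fs hom_def inv_cancel1)
  finally have "(B, inv C h, A) \<in> Arr (tcat Ob C T)" using A hi h by (simp add: hom_def)
  then show ?thesis
    using x hi h c by (intro isoI[of _ _ "(B, inv C h, A)"]) (auto simp: hom_def)
qed

lemma forget_omap[simp]: "omap (forget C T) A = fst A" by (simp add: forget_def)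
lemma forget_amap[simp]: "amap (forget C T) (A, h, B) = h" by (simp add: forget_def)



section \<open>Adjunctions\<close>

context fixes C :: "('oc,'mc) cat" and D :: "('od,'md) cat" and F G \<eta> \<epsilon>
  assumes adj: "adjunction C D F G \<eta> \<epsilon>" begin
lemma adj_F: "is_functor D C F" using adj unfolding adjunction_def by blast
lemma adj_G: "is_functor C D G" using adj unfolding adjunction_def by blast
lemma adj_eta: "nat_trans D D (id_functor D) (comp_functor G F) \<eta>" using adj unfolding adjunction_def by blast
lemma adj_eps: "nat_trans C C (comp_functor F G) (id_functor C) \<epsilon>" using adj unfolding adjunction_def by blast
lemma adj_tri1: "X \<in> Obj D \<Longrightarrow> Comp C (\<epsilon> (omap F X)) (amap F (\<eta> X)) = Id C (omap F X)"
  using adj unfolding adjunction_def by blast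
lemma adj_tri2: "Y \<in> Obj C \<Longrightarrow> Comp D (amap G (\<epsilon> Y)) (\<eta> (omap G Y)) = Id D (omap G Y)"
  using adj unfolding adjunction_def by blast
lemma adj_C: "category C" using fun_cat1[OF adj_G] .
lemma adj_D: "category D" using fun_cat2[OF adj_G] .
lemma eta_arr: "X \<in> Obj D \<Longrightarrow> \<eta> X \<in> Arr D" using nt_arr[OF adj_eta] .
lemma eta_dom: "X \<in> Obj D \<Longrightarrow> Dom D (\<eta> X) = X" using nt_dom[OF adj_eta] by simp
lemma eta_cod: "X \<in> Obj D \<Longrightarrow> Cod D (\<eta> X) = omap G (omap F X)" using nt_cod[OF adj_eta] by simp
lemma eps_arr: "X \<in> Obj C \<Longrightarrow> \<epsilon> X \<in> Arr C" using nt_arr[OF adj_eps] .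
lemma eps_dom: "X \<in> Obj C \<Longrightarrow> Dom C (\<epsilon> X) = omap F (omap G X)" using nt_dom[OF adj_eps] by simp
lemma eps_cod: "X \<in> Obj C \<Longrightarrow> Cod C (\<epsilon> X) = X" using nt_cod[OF adj_eps] by simp
lemma eta_nat: "f \<in> Arr D \<Longrightarrow> Comp D (\<eta> (Cod D f)) f = Comp D (amap G (amap F f)) (\<eta> (Dom D f))"
  using nt_nat[OF adj_eta] by simp
lemma eps_nat: "f \<in> Arr C \<Longrightarrow> Comp C (\<epsilon> (Cod C f)) (amap F (amap G f)) = Comp C f (\<epsilon> (Dom C f))"
  using nt_nat[OF adj_eps] by simp
end

lemmas adjs = adj_C adj_D adj_F adj_G eta_arr eta_dom eta_cod eps_arr eps_dom eps_cod

lemma comparison_omap[simp]: "omap (comparison C G \<epsilon>) X = (omap G X, amap G (\<epsilon> X))"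
  by (simp add: comparison_def Let_def)
lemma comparison_amap[simp]: "amap (comparison C G \<epsilon>) f = ((omap G (Dom C f), amap G (\<epsilon> (Dom C f))), amap G f, (omap G (Cod C f), amap G (\<epsilon> (Cod C f))))"
  by (simp add: comparison_def Let_def)

lemma comparison_obj: assumes adj: "adjunction C D F G \<eta> \<epsilon>" and X: "X \<in> Obj C"
  shows "(omap G X, amap G (\<epsilon> X)) \<in> EMOb D (comp_functor G F) \<eta> (adj_mult F G \<epsilon>)"
proof -
  note A = adjs[OF adj] and G = adj_G[OF adj] and F = adj_F[OF adj]
  have "Comp D (amap G (\<epsilon> X)) (amap G (amap F (amap G (\<epsilon> X)))) = amap G (Comp C (\<epsilon> X) (amap F (amap G (\<epsilon> X))))"
    using A X by (simp add: fs cs)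
  also have "\<dots> = amap G (Comp C (\<epsilon> X) (\<epsilon> (omap F (omap G X))))"
    using eps_nat[OF adj, of "\<epsilon> X"] A X by (simp add: fs cs)
  also have "\<dots> = Comp D (amap G (\<epsilon> X)) (amap G (\<epsilon> (omap F (omap G X))))"
    using A X by (simp add: fs cs)
  finally show ?thesis using A X adj_tri2[OF adj X]
    by (simp add: EMOb_def hom_def fs cs adj_mult_def)
qed

lemma comparison_functor: assumes adj: "adjunction C D F G \<eta> \<epsilon>"
  shows "is_functor C (EM_cat D (comp_functor G F) \<eta> (adj_mult F G \<epsilon>)) (comparison C G \<epsilon>)"
proof -
  note A = adjs[OF adj] and G = adj_G[OF adj] and F = adj_F[OF adj]
  have GF: "is_functor D D (comp_functor G F)" by (rule is_functor_comp[OF F G])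
  have E: "category (EM_cat D (comp_functor G F) \<eta> (adj_mult F G \<epsilon>))"
    unfolding EM_tcat by (rule tcat_category[OF A(2) GF tob_EM])
  have arr: "amap (comparison C G \<epsilon>) f \<in> Arr (EM_cat D (comp_functor G F) \<eta> (adj_mult F G \<epsilon>))" if f: "f \<in> Arr C" for f
  proof -
    have "Comp D (amap G f) (amap G (\<epsilon> (Dom C f))) = amap G (Comp C f (\<epsilon> (Dom C f)))"
      using A f by (simp add: fs cs)
    also have "\<dots> = amap G (Comp C (\<epsilon> (Cod C f)) (amap F (amap G f)))" using eps_nat[OF adj f] by simp
    also have "\<dots> = Comp D (amap G (\<epsilon> (Cod C f))) (amap G (amap F (amap G f)))"
      using A f by (simp add: fs cs)
    finally show ?thesis unfolding EM_tcat using f A comparison_obj[OF adj] by (simp add: hom_def fs cs)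
  qed
  show ?thesis unfolding is_functor_def
  proof (intro conjI ballI impI)
    show "category C" "category (EM_cat D (comp_functor G F) \<eta> (adj_mult F G \<epsilon>))" using A E by auto
  next
    fix X assume "X \<in> Obj C" then show "omap (comparison C G \<epsilon>) X \<in> Obj (EM_cat D (comp_functor G F) \<eta> (adj_mult F G \<epsilon>))"
      unfolding EM_tcat using comparison_obj[OF adj] by simp
  next
    fix f assume f: "f \<in> Arr C"
    show "amap (comparison C G \<epsilon>) f \<in> hom (EM_cat D (comp_functor G F) \<eta> (adj_mult F G \<epsilon>))
           (omap (comparison C G \<epsilon>) (Dom C f)) (omap (comparison C G \<epsilon>) (Cod C f))"
      using arr[OF f] unfolding EM_tcat by (simp add: hom_def)
  next
    fix X assume "X \<in> Obj C" then show "amap (comparison C G \<epsilon>) (Id C X) = Id (EM_cat D (comp_functor G F) \<eta> (adj_mult F G \<epsilon>)) (omap (comparison C G \<epsilon>) X)"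
      unfolding EM_tcat using A by (simp add: fs cs)
  next
    fix f g assume "f \<in> Arr C" "g \<in> Arr C" "Cod C f = Dom C g"
    then show "amap (comparison C G \<epsilon>) (Comp C g f) =
       Comp (EM_cat D (comp_functor G F) \<eta> (adj_mult F G \<epsilon>)) (amap (comparison C G \<epsilon>) g) (amap (comparison C G \<epsilon>) f)"
      unfolding EM_tcat using A by (simp add: fs cs)
  qed
qed



section \<open>Equivalences\<close>

definition faithful where "faithful A B K \<longleftrightarrow> (\<forall>f\<in>Arr A. \<forall>g\<in>Arr A. Dom A f = Dom A g \<longrightarrow> Cod A f = Cod A g \<longrightarrow>
   amap K f = amap K g \<longrightarrow> f = g)"
definition full where "full A B K \<longleftrightarrow> (\<forall>X\<in>Obj A. \<forall>Y\<in>Obj A. \<forall>w\<in>hom B (omap K X) (omap K Y). \<exists>f\<in>hom A X Y. amap K f = w)"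
definition esurj where "esurj A B K \<longleftrightarrow> (\<forall>W\<in>Obj B. \<exists>X\<in>Obj A. \<exists>i. i \<in> hom B (omap K X) W \<and> iso B i)"

lemma faithfulD: "faithful A B K \<Longrightarrow> f \<in> Arr A \<Longrightarrow> g \<in> Arr A \<Longrightarrow> Dom A f = Dom A g \<Longrightarrow> Cod A f = Cod A g \<Longrightarrow>
   amap K f = amap K g \<Longrightarrow> f = g" unfolding faithful_def by blast

lemma fullD: "full A B K \<Longrightarrow> X \<in> Obj A \<Longrightarrow> Y \<in> Obj A \<Longrightarrow> w \<in> hom B (omap K X) (omap K Y) \<Longrightarrow> \<exists>f\<in>hom A X Y. amap K f = w"
  unfolding full_def by blast

lemma equiv_ff: assumes e: "equivalence A B K"
  shows "faithful A B K" "full A B K" "esurj A B K"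
proof -
  obtain L \<alpha> \<beta> where K: "is_functor A B K" and L: "is_functor B A L"
    and a: "nat_iso A A (id_functor A) (comp_functor L K) \<alpha>" and b: "nat_iso B B (comp_functor K L) (id_functor B) \<beta>"
    using e unfolding equivalence_def by blast
  have cA: "category A" and cB: "category B" using K by (auto dest: fun_cat1 fun_cat2)
  have at: "nat_trans A A (id_functor A) (comp_functor L K) \<alpha>" and ai: "\<And>X. X \<in> Obj A \<Longrightarrow> iso A (\<alpha> X)"
    using a unfolding nat_iso_def by auto
  have bt: "nat_trans B B (comp_functor K L) (id_functor B) \<beta>" and bi: "\<And>X. X \<in> Obj B \<Longrightarrow> iso B (\<beta> X)"
    using b unfolding nat_iso_def by auto
  note an = nt_nat[OF at] and bn = nt_nat[OF bt]
  note aa = nt_arr[OF at] nt_dom[OF at] nt_cod[OF at] and ba = nt_arr[OF bt] nt_dom[OF bt] nt_cod[OF bt]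
  show fK: "faithful A B K" unfolding faithful_def
  proof (intro ballI impI)
    fix f g assume f: "f \<in> Arr A" "g \<in> Arr A" "Dom A f = Dom A g" "Cod A f = Cod A g" "amap K f = amap K g"
    have "Comp A (\<alpha> (Cod A f)) f = Comp A (\<alpha> (Cod A f)) g"
      using an[of f] an[of g] f by simp
    moreover have Y: "Cod A f \<in> Obj A" using f(1) cA by (simp add: cs)
    moreover have "Dom A (\<alpha> (Cod A f)) = Cod A f" using nt_dom[OF at Y] by simp
    ultimately show "f = g"
      using iso_cancel_l[OF cA ai[OF Y] f(1) f(2)] f(4) by metis
  qed
  have fL: "faithful B A L" unfolding faithful_def
  proof (intro ballI impI)
    fix f g assume f: "f \<in> Arr B" "g \<in> Arr B" "Dom B f = Dom B g" "Cod B f = Cod B g" "amap L f = amap L g"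
    have "Comp B f (\<beta> (Dom B f)) = Comp B g (\<beta> (Dom B f))"
      using bn[of f] bn[of g] f by simp
    moreover have X: "Dom B f \<in> Obj B" using f(1) cB by (simp add: cs)
    moreover have "Cod B (\<beta> (Dom B f)) = Dom B f" using nt_cod[OF bt X] by simp
    ultimately show "f = g"
      using iso_cancel_r[OF cB bi[OF X] f(1) f(2)] f(3) by metis
  qed
  show "full A B K" unfolding full_def
  proof (intro ballI)
    fix X Y w assume X: "X \<in> Obj A" and Y: "Y \<in> Obj A" and w: "w \<in> hom B (omap K X) (omap K Y)"
    note iY = inv_props[OF ai[OF Y]]
    let ?f = "Comp A (inv A (\<alpha> Y)) (Comp A (amap L w) (\<alpha> X))"
    have f: "?f \<in> hom A X Y" using iY aa X Y w L cA by (simp add: hom_def cs fs)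
    have "Comp A (amap L (amap K ?f)) (\<alpha> X) = Comp A (\<alpha> Y) ?f"
      using an[of ?f] f by (simp add: hom_def)
    also have "\<dots> = Comp A (amap L w) (\<alpha> X)"
      using iY aa X Y w L cA ai[OF Y] by (simp add: hom_def cs fs inv_cancel2)
    finally have "amap L (amap K ?f) = amap L w"
      using iso_cancel_r[OF cA ai[OF X], of "amap L (amap K ?f)" "amap L w"] f w aa X Y L K cA
      by (simp add: hom_def cs fs)
    then have "amap K ?f = w" using faithfulD[OF fL, of "amap K ?f" w] f w K by (simp add: hom_def fs)
    then show "\<exists>f\<in>hom A X Y. amap K f = w" using f by blast
  qed
  show "esurj A B K" unfolding esurj_def
  proof
    fix W assume W: "W \<in> Obj B"
    then show "\<exists>X\<in>Obj A. \<exists>i. i \<in> hom B (omap K X) W \<and> iso B i"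
      using ba bi L by (intro bexI[of _ "omap L W"] exI[of _ "\<beta> W"]) (auto simp: hom_def fs)
  qed
qed

lemma ff_equiv: assumes K: "is_functor A B K" and fK: "faithful A B K" and uK: "full A B K" and eK: "esurj A B K"
  shows "equivalence A B K"
proof -
  have cA: "category A" and cB: "category B" using K by (auto dest: fun_cat1 fun_cat2)
  have "\<forall>W\<in>Obj B. \<exists>X i. X \<in> Obj A \<and> i \<in> hom B (omap K X) W \<and> iso B i" using eK unfolding esurj_def by blast
  then obtain Z i where Zi: "\<And>W. W \<in> Obj B \<Longrightarrow> Z W \<in> Obj A \<and> i W \<in> hom B (omap K (Z W)) W \<and> iso B (i W)"
    by metis
  have Z: "\<And>W. W \<in> Obj B \<Longrightarrow> Z W \<in> Obj A" and iA: "\<And>W. W \<in> Obj B \<Longrightarrow> i W \<in> Arr B"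
    and iD: "\<And>W. W \<in> Obj B \<Longrightarrow> Dom B (i W) = omap K (Z W)" and iC: "\<And>W. W \<in> Obj B \<Longrightarrow> Cod B (i W) = W"
    and ii: "\<And>W. W \<in> Obj B \<Longrightarrow> iso B (i W)" using Zi by (auto simp: hom_def)
  have jA: "\<And>W. W \<in> Obj B \<Longrightarrow> inv B (i W) \<in> Arr B"
    and jD: "\<And>W. W \<in> Obj B \<Longrightarrow> Dom B (inv B (i W)) = W" and jC: "\<And>W. W \<in> Obj B \<Longrightarrow> Cod B (inv B (i W)) = omap K (Z W)"
    and ij1: "\<And>W. W \<in> Obj B \<Longrightarrow> Comp B (inv B (i W)) (i W) = Id B (omap K (Z W))"
    and ij2: "\<And>W. W \<in> Obj B \<Longrightarrow> Comp B (i W) (inv B (i W)) = Id B W"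
    using inv_props[OF ii] iD iC by auto
  note ia = Z iA iD iC jA jD jC
  define tr where "tr w = Comp B (inv B (i (Cod B w))) (Comp B w (i (Dom B w)))" for w
  have tr: "tr w \<in> hom B (omap K (Z (Dom B w))) (omap K (Z (Cod B w)))" if "w \<in> Arr B" for w
    using that ia cB unfolding tr_def by (simp add: cs hom_def)
  define Lm where "Lm w = (SOME f. f \<in> hom A (Z (Dom B w)) (Z (Cod B w)) \<and> amap K f = tr w)" for w
  have Lm: "Lm w \<in> hom A (Z (Dom B w)) (Z (Cod B w)) \<and> amap K (Lm w) = tr w" if w: "w \<in> Arr B" for w
  proof -
    have "\<exists>f. f \<in> hom A (Z (Dom B w)) (Z (Cod B w)) \<and> amap K f = tr w"
      using fullD[OF uK _ _ tr[OF w]] Z w cB by (meson cs)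
    then show ?thesis unfolding Lm_def by (rule someI_ex)
  qed
  have Luniq: "f = Lm w" if "w \<in> Arr B" "f \<in> hom A (Z (Dom B w)) (Z (Cod B w))" "amap K f = tr w" for f w
    using faithfulD[OF fK, of f "Lm w"] Lm[of w] that by (auto simp: hom_def)
  define L where "L = \<lparr>omap = Z, amap = Lm\<rparr>"
  have L: "is_functor B A L" unfolding is_functor_def L_def
  proof (intro conjI ballI impI, simp_all add: cA cB)
    fix W assume "W \<in> Obj B" then show "Z W \<in> Obj A" using Z by auto
  next
    fix w assume "w \<in> Arr B" then show "Lm w \<in> hom A (Z (Dom B w)) (Z (Cod B w))" using Lm by auto
  next
    fix W assume W: "W \<in> Obj B"
    have "amap K (Id A (Z W)) = tr (Id B W)"
      unfolding tr_def using W ia cB cA K ij1 by (simp add: cs fs)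
    then show "Lm (Id B W) = Id A (Z W)"
      using Luniq[of "Id B W" "Id A (Z W)"] W cA cB Z by (simp add: cs hom_def)
  next
    fix f g assume fg: "f \<in> Arr B" "g \<in> Arr B" "Cod B f = Dom B g"
    note Lf = Lm[OF fg(1)] and Lg = Lm[OF fg(2)]
    have "amap K (Comp A (Lm g) (Lm f)) = Comp B (tr g) (tr f)"
      using Lf Lg fg K by (simp add: fs hom_def)
    also have "\<dots> = tr (Comp B g f)"
      unfolding tr_def using fg ia cB ii by (simp add: cs inv_cancel2)
    finally show "Lm (Comp B g f) = Comp A (Lm g) (Lm f)"
      using Luniq[of "Comp B g f" "Comp A (Lm g) (Lm f)"] fg Lf Lg cA cB by (simp add: cs hom_def)
  qed
  define \<alpha> where "\<alpha> X = (SOME f. f \<in> hom A X (Z (omap K X)) \<and> amap K f = inv B (i (omap K X)))" for X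
  have \<alpha>: "\<alpha> X \<in> hom A X (Z (omap K X)) \<and> amap K (\<alpha> X) = inv B (i (omap K X))" if X: "X \<in> Obj A" for X
  proof -
    have "\<exists>f. f \<in> hom A X (Z (omap K X)) \<and> amap K f = inv B (i (omap K X))"
      using fullD[OF uK X Z, of "omap K X" "inv B (i (omap K X))"] ia X K by (auto simp: fs hom_def)
    then show ?thesis unfolding \<alpha>_def by (rule someI_ex)
  qed
  have \<alpha>iso: "iso A (\<alpha> X)" if X: "X \<in> Obj A" for X
  proof -
    have KX: "omap K X \<in> Obj B" using K X by (simp add: fs)
    obtain g where g: "g \<in> hom A (Z (omap K X)) X" "amap K g = i (omap K X)"
      using fullD[OF uK Z[OF KX] X, of "i (omap K X)"] ia KX by (auto simp: hom_def)
    have "Comp A g (\<alpha> X) = Id A X"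
      using faithfulD[OF fK, of "Comp A g (\<alpha> X)" "Id A X"] g \<alpha>[OF X] cA K X ij2[OF KX] ia KX
      by (simp add: hom_def cs fs)
    moreover have "Comp A (\<alpha> X) g = Id A (Z (omap K X))"
      using faithfulD[OF fK, of "Comp A (\<alpha> X) g" "Id A (Z (omap K X))"] g \<alpha>[OF X] cA K X ij1[OF KX] ia KX
      by (simp add: hom_def cs fs)
    ultimately show ?thesis using g \<alpha>[OF X] by (intro isoI[of _ _ g]) (auto simp: hom_def)
  qed
  have LK: "is_functor A A (comp_functor L K)" by (rule is_functor_comp[OF K L])
  have KL: "is_functor B B (comp_functor K L)" by (rule is_functor_comp[OF L K])
  have a: "nat_iso A A (id_functor A) (comp_functor L K) \<alpha>"
    unfolding nat_iso_def nat_trans_def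
  proof (intro conjI ballI is_functor_id cA LK \<alpha>iso)
    fix X assume "X \<in> Obj A" then show "\<alpha> X \<in> hom A (omap (id_functor A) X) (omap (comp_functor L K) X)"
      using \<alpha> by (simp add: L_def)
  next
    fix f assume f: "f \<in> Arr A"
    have d: "Dom A f \<in> Obj A" "Cod A f \<in> Obj A" using f cA by (simp_all add: cs)
    note a1 = \<alpha>[OF d(1)] and a2 = \<alpha>[OF d(2)]
    have KfA: "amap K f \<in> Arr B" "omap K (Dom A f) \<in> Obj B" "omap K (Cod A f) \<in> Obj B" using f K d by (simp_all add: fs)
    note tK = Lm[OF KfA(1)]
    have "amap K (Comp A (\<alpha> (Cod A f)) f) = amap K (Comp A (Lm (amap K f)) (\<alpha> (Dom A f)))"
      using f K a1 a2 tK KfA cA cB ij2 ia ii unfolding tr_def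
      by (simp add: fs cs hom_def inv_cancel1)
    then show "Comp A (\<alpha> (Cod A f)) (amap (id_functor A) f) = Comp A (amap (comp_functor L K) f) (\<alpha> (Dom A f))"
      using faithfulD[OF fK, of "Comp A (\<alpha> (Cod A f)) f" "Comp A (Lm (amap K f)) (\<alpha> (Dom A f))"]
        f K a1 a2 tK KfA cA by (simp add: fs cs hom_def L_def)
  qed
  have b: "nat_iso B B (comp_functor K L) (id_functor B) i"
    unfolding nat_iso_def nat_trans_def
  proof (intro conjI ballI is_functor_id cB KL ii)
    fix W assume "W \<in> Obj B" then show "i W \<in> hom B (omap (comp_functor K L) W) (omap (id_functor B) W)"
      using ia by (simp add: L_def hom_def)
  next
    fix w assume w: "w \<in> Arr B"
    show "Comp B (i (Cod B w)) (amap (comp_functor K L) w) = Comp B (amap (id_functor B) w) (i (Dom B w))"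
      using Lm[OF w] w ia ii cB unfolding tr_def by (simp add: L_def cs inv_cancel2)
  qed
  show ?thesis unfolding equivalence_def using K L a b by blast
qed

lemma ff_reflects_iso: assumes K: "is_functor A B K" and fK: "faithful A B K" and uK: "full A B K"
  and f: "f \<in> Arr A" and i: "iso B (amap K f)" shows "iso A f"
proof -
  have cA: "category A" and cB: "category B" using K by (auto dest: fun_cat1 fun_cat2)
  note ip = inv_props[OF i]
  have d: "Dom A f \<in> Obj A" "Cod A f \<in> Obj A" using f cA by (simp_all add: cs)
  obtain g where g: "g \<in> hom A (Cod A f) (Dom A f)" "amap K g = inv B (amap K f)"
    using fullD[OF uK d(2) d(1), of "inv B (amap K f)"] ip f K by (auto simp: hom_def fs)
  have "Comp A g f = Id A (Dom A f)"
    using faithfulD[OF fK, of "Comp A g f" "Id A (Dom A f)"] g ip f K cA d by (simp add: hom_def fs cs)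
  moreover have "Comp A f g = Id A (Cod A f)"
    using faithfulD[OF fK, of "Comp A f g" "Id A (Cod A f)"] g ip f K cA d by (simp add: hom_def fs cs)
  ultimately show ?thesis using f g by (intro isoI[of _ _ g]) (auto simp: hom_def)
qed



lemma reassoc_id: assumes "category C" "f \<in> Arr C" "g \<in> Arr C" "r \<in> Arr C" "Cod C r = Dom C f" "Cod C f = Dom C g"
  "Comp C g f = Id C (Dom C f)" shows "Comp C g (Comp C f r) = r"
  using reassoc[OF assms] assms by (simp add: cs)

lemma split_epi_cancel: assumes c: "category C" and "e \<in> Arr C" "s \<in> Arr C" "Dom C s = Cod C e" "Cod C s = Dom C e"
  "Comp C e s = Id C (Cod C e)" "u \<in> Arr C" "v \<in> Arr C" "Dom C u = Cod C e" "Dom C v = Cod C e"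
  "Comp C u e = Comp C v e" shows "u = v"
proof -
  have "u = Comp C (Comp C u e) s" using assms(1-10) by (simp add: cs)
  also have "\<dots> = Comp C (Comp C v e) s" using assms(11) by simp
  also have "\<dots> = v" using assms(1-10) by (simp add: cs)
  finally show ?thesis .
qed

lemma EMObD: "(Y, y) \<in> EMOb D T \<eta> \<mu> \<Longrightarrow> Y \<in> Obj D \<and> y \<in> Arr D \<and> Dom D y = omap T Y \<and> Cod D y = Y \<and>
   Comp D y (\<eta> Y) = Id D Y \<and> Comp D y (amap T y) = Comp D y (\<mu> Y)"
  by (simp add: EMOb_def hom_def)

lemma EM_split: assumes adj: "adjunction A D F G \<eta> \<epsilon>" and W: "(Y, y) \<in> EMOb D (comp_functor G F) \<eta> (adj_mult F G \<epsilon>)"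
  shows "coequalizer D (amap G (amap F y)) (amap G (\<epsilon> (omap F Y))) y"
proof -
  note A = adjs[OF adj] and w = EMObD[OF W]
  have FY: "omap F Y \<in> Obj A" using w A by (simp add: fs)
  show ?thesis
  proof (rule split_coeq[where Xs="omap G (omap F (omap G (omap F Y)))" and Xt="omap G (omap F Y)" and Y=Y and s="\<eta> Y" and t="\<eta> (omap G (omap F Y))"])
    show "Comp D (amap G (amap F y)) (\<eta> (omap G (omap F Y))) = Comp D (\<eta> Y) y"
      using eta_nat[OF adj, of y] w by simp
    show "Comp D (amap G (\<epsilon> (omap F Y))) (\<eta> (omap G (omap F Y))) = Id D (omap G (omap F Y))"
      using adj_tri2[OF adj FY] .
    show "Comp D y (amap G (amap F y)) = Comp D y (amap G (\<epsilon> (omap F Y)))" using w by (simp add: adj_mult_def)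
  qed (use w A FY in \<open>auto simp: hom_def fs\<close>)
qed

lemma beck:
  assumes adj: "adjunction A D F G \<eta> \<epsilon>"
    and refl: "\<And>f. f \<in> Arr A \<Longrightarrow> iso D (amap G f) \<Longrightarrow> iso A f"
    and coeq: "\<And>Y y. (Y, y) \<in> EMOb D (comp_functor G F) \<eta> (adj_mult F G \<epsilon>) \<Longrightarrow>
        \<exists>q. coequalizer A (amap F y) (\<epsilon> (omap F Y)) q \<and>
            coequalizer D (amap G (amap F y)) (amap G (\<epsilon> (omap F Y))) (amap G q)"
  shows "equivalence A (EM_cat D (comp_functor G F) \<eta> (adj_mult F G \<epsilon>)) (comparison A G \<epsilon>)"
proof -
  note Aj = adjs[OF adj]
  have cA: "category A" and cD: "category D" using Aj by auto
  have F: "is_functor D A F" and G: "is_functor A D G" using Aj by auto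
  let ?E = "EM_cat D (comp_functor G F) \<eta> (adj_mult F G \<epsilon>)"
  let ?K = "comparison A G \<epsilon>"
  have K: "is_functor A ?E ?K" by (rule comparison_functor[OF adj])
  have canon: "coequalizer A (amap F (amap G (\<epsilon> X))) (\<epsilon> (omap F (omap G X))) (\<epsilon> X)" if X: "X \<in> Obj A" for X
  proof -
    have W: "(omap G X, amap G (\<epsilon> X)) \<in> EMOb D (comp_functor G F) \<eta> (adj_mult F G \<epsilon>)"
      by (rule comparison_obj[OF adj X])
    obtain q where q: "coequalizer A (amap F (amap G (\<epsilon> X))) (\<epsilon> (omap F (omap G X))) q"
       and Gq: "coequalizer D (amap G (amap F (amap G (\<epsilon> X)))) (amap G (\<epsilon> (omap F (omap G X)))) (amap G q)"
      using coeq[OF W] by blast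
    note qa = coeq_arrs[OF q]
    have e1: "Comp A (\<epsilon> X) (amap F (amap G (\<epsilon> X))) = Comp A (\<epsilon> X) (\<epsilon> (omap F (omap G X)))"
      using eps_nat[OF adj, of "\<epsilon> X"] X Aj by simp
    obtain c where c: "c \<in> Arr A" "Dom A c = Cod A q" "Cod A c = X" "Comp A c q = \<epsilon> X"
      using coeq_factor[OF q, of "\<epsilon> X"] e1 qa X Aj by (auto simp: fs)
    have Ge: "coequalizer D (amap G (amap F (amap G (\<epsilon> X)))) (amap G (\<epsilon> (omap F (omap G X)))) (amap G (\<epsilon> X))"
      using EM_split[OF adj W] by simp
    have "Comp D (amap G c) (amap G q) = amap G (\<epsilon> X)"
      using c qa by (simp add: fun_comp[OF G, symmetric])
    then have "iso D (amap G c)"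
      using coeq_comparison_iso[OF cD Gq Ge, of "amap G c"] c qa G Aj X by (simp add: fs)
    then have "iso A c" using refl c by blast
    then have "coequalizer A (amap F (amap G (\<epsilon> X))) (\<epsilon> (omap F (omap G X))) (Comp A c q)"
      using coeq_iso[OF cA q, of c] c by simp
    then show ?thesis using c by simp
  qed
  have faithful: "faithful A ?E ?K" unfolding faithful_def
  proof (intro ballI impI)
    fix f g assume f: "f \<in> Arr A" "g \<in> Arr A" "Dom A f = Dom A g" "Cod A f = Cod A g" "amap ?K f = amap ?K g"
    then have Gfg: "amap G f = amap G g" by simp
    have "Comp A f (\<epsilon> (Dom A f)) = Comp A (\<epsilon> (Cod A f)) (amap F (amap G f))" using eps_nat[OF adj f(1)] by simp
    also have "\<dots> = Comp A (\<epsilon> (Cod A g)) (amap F (amap G g))" using Gfg f by simp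
    also have "\<dots> = Comp A g (\<epsilon> (Dom A f))" using eps_nat[OF adj f(2)] f by simp
    finally have fg: "Comp A f (\<epsilon> (Dom A f)) = Comp A g (\<epsilon> (Dom A f))" .
    have X: "Dom A f \<in> Obj A" using f(1) cA by (simp add: cs)
    have "Cod A (\<epsilon> (Dom A f)) = Dom A f" using eps_cod[OF adj X] .
    then show "f = g" using coeq_epi[OF cA canon[OF X] f(1) f(2)] fg f(3,4) by metis
  qed
  have full: "full A ?E ?K" unfolding full_def
  proof (intro ballI)
    fix X Y w assume X: "X \<in> Obj A" and Y: "Y \<in> Obj A" and w: "w \<in> hom ?E (omap ?K X) (omap ?K Y)"
    obtain h where wh: "w = ((omap G X, amap G (\<epsilon> X)), h, (omap G Y, amap G (\<epsilon> Y)))"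
      and h: "h \<in> Arr D" "Dom D h = omap G X" "Cod D h = omap G Y"
      and hc: "Comp D h (amap G (\<epsilon> X)) = Comp D (amap G (\<epsilon> Y)) (amap G (amap F h))"
      using w unfolding EM_tcat by (cases w) (auto simp: hom_def)
    let ?r = "Comp A (\<epsilon> Y) (amap F h)"
    have GX: "omap G X \<in> Obj D" and GY: "omap G Y \<in> Obj D" using X Y G by (simp_all add: fs)
    have r: "?r \<in> Arr A" "Dom A ?r = omap F (omap G X)" "Cod A ?r = Y" using h Aj Y F cA by (simp_all add: cs fs)
    have "Comp A ?r (amap F (amap G (\<epsilon> X))) = Comp A (\<epsilon> Y) (amap F (Comp D h (amap G (\<epsilon> X))))"
      using h Aj X Y F G cA by (simp add: cs fs)
    also have "\<dots> = Comp A (\<epsilon> Y) (amap F (Comp D (amap G (\<epsilon> Y)) (amap G (amap F h))))" using hc by simp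
    also have "\<dots> = Comp A (\<epsilon> Y) (Comp A (amap F (amap G (\<epsilon> Y))) (amap F (amap G (amap F h))))"
      using h Aj X Y F G cA by (simp add: cs fs)
    also have "\<dots> = Comp A (\<epsilon> Y) (Comp A (\<epsilon> (omap F (omap G Y))) (amap F (amap G (amap F h))))"
      using h Aj X Y F G cA eps_nat[OF adj, of "\<epsilon> Y"] by (intro reassoc_eq) (auto simp: cs fs)
    also have "\<dots> = Comp A (\<epsilon> Y) (Comp A (amap F h) (\<epsilon> (omap F (omap G X))))"
      using h F eps_nat[OF adj, of "amap F h"] by (simp add: fs)
    also have "\<dots> = Comp A ?r (\<epsilon> (omap F (omap G X)))"
      using h Aj X Y F G cA by (simp add: cs fs)
    finally have rc: "Comp A ?r (amap F (amap G (\<epsilon> X))) = Comp A ?r (\<epsilon> (omap F (omap G X)))" .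
    obtain k where k: "k \<in> Arr A" "Dom A k = X" "Cod A k = Y" "Comp A k (\<epsilon> X) = ?r"
      using coeq_factor[OF canon[OF X], of ?r] r rc X Aj F G by (auto simp: fs)
    have "amap G k = Comp D (amap G k) (Comp D (amap G (\<epsilon> X)) (\<eta> (omap G X)))"
      using adj_tri2[OF adj X] k G cD by (simp add: fs cs)
    also have "\<dots> = Comp D (amap G (Comp A k (\<epsilon> X))) (\<eta> (omap G X))"
      using k(1-3) Aj X G GX cD by (simp add: cs fs)
    also have "\<dots> = Comp D (amap G ?r) (\<eta> (omap G X))" using k by simp
    also have "\<dots> = Comp D (amap G (\<epsilon> Y)) (Comp D (amap G (amap F h)) (\<eta> (omap G X)))"
      using h Aj X Y F G GX cD by (simp add: cs fs)
    also have "\<dots> = Comp D (amap G (\<epsilon> Y)) (Comp D (\<eta> (omap G Y)) h)"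
      using eta_nat[OF adj h(1)] h by simp
    also have "\<dots> = h" using h Aj Y GY G cD adj_tri2[OF adj Y] by (simp add: reassoc_id cs fs)
    finally have Gk: "amap G k = h" .
    show "\<exists>f\<in>hom A X Y. amap ?K f = w" using k Gk wh by (intro bexI[of _ k]) (auto simp: hom_def)
  qed
  have es: "esurj A ?E ?K" unfolding esurj_def
  proof
    fix W assume "W \<in> Obj ?E"
    then obtain Y y where W: "W = (Y, y)" "(Y, y) \<in> EMOb D (comp_functor G F) \<eta> (adj_mult F G \<epsilon>)"
      unfolding EM_tcat by (cases W) auto
    note wy = EMObD[OF W(2)]
    obtain q where q: "coequalizer A (amap F y) (\<epsilon> (omap F Y)) q"
       and Gq: "coequalizer D (amap G (amap F y)) (amap G (\<epsilon> (omap F Y))) (amap G q)"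
      using coeq[OF W(2)] by blast
    note qa = coeq_arrs[OF q] and Gqa = coeq_arrs[OF Gq]
    have ys: "coequalizer D (amap G (amap F y)) (amap G (\<epsilon> (omap F Y))) y" by (rule EM_split[OF adj W(2)])
    note ya = coeq_arrs[OF ys]
    have FY: "omap F Y \<in> Obj A" using wy F by (simp add: fs)
    have qd: "Dom A q = omap F Y" using qa FY Aj by simp
    have Q: "Cod A q \<in> Obj A" using qa cA by (simp add: cs)
    have GQ: "omap G (Cod A q) \<in> Obj D" using Q G by (simp add: fs)
    obtain j where j: "j \<in> Arr D" "Dom D j = Cod D (amap G q)" "Cod D j = Y" "Comp D j (amap G q) = y"
      using coeq_factor[OF Gq, of y] ya wy Gqa by auto
    have jd: "Dom D j = omap G (Cod A q)" using j qa G by (simp add: fs)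
    have ji: "iso D j" by (rule coeq_comparison_iso[OF cD Gq ys]) (use j Gqa cD in \<open>auto simp: cs\<close>)
    define \<sigma> where "\<sigma> = Comp D (\<eta> Y) j"
    have \<sigma>: "\<sigma> \<in> Arr D" "Dom D \<sigma> = omap G (Cod A q)" "Cod D \<sigma> = omap G (omap F Y)"
      unfolding \<sigma>_def using j jd wy Aj cD by (simp_all add: cs)
    have "Comp D j (Comp D (amap G q) \<sigma>) = Comp D j (Id D (omap G (Cod A q)))"
    proof -
      have "Comp D j (Comp D (amap G q) \<sigma>) = Comp D y \<sigma>"
        by (rule reassoc) (use j jd \<sigma> qa G cD in \<open>auto simp: cs fs qd\<close>)
      also have "\<dots> = Comp D y (Comp D (\<eta> Y) j)" unfolding \<sigma>_def by simp
      also have "\<dots> = j" using wy j jd Aj cD by (simp add: cs reassoc_id)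
      finally show ?thesis using j jd cD by (simp add: cs)
    qed
    then have \<sigma>s: "Comp D (amap G q) \<sigma> = Id D (omap G (Cod A q))"
      using iso_cancel_l[OF cD ji] j jd \<sigma> qa G cD GQ by (simp add: cs fs qd)
    have jm: "Comp D j (amap G (\<epsilon> (Cod A q))) = Comp D y (amap G (amap F j))"
    proof (rule split_epi_cancel[OF cD, of "amap G (amap F (amap G q))" "amap G (amap F \<sigma>)"])
      show "Comp D (amap G (amap F (amap G q))) (amap G (amap F \<sigma>)) = Id D (Cod D (amap G (amap F (amap G q))))"
        using \<sigma>s \<sigma> qa F G GQ by (simp add: fs fun_comp[OF F, symmetric] fun_comp[OF G, symmetric] qd)
      have "Comp D (Comp D j (amap G (\<epsilon> (Cod A q)))) (amap G (amap F (amap G q)))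
          = Comp D j (amap G (Comp A (\<epsilon> (Cod A q)) (amap F (amap G q))))"
        using j jd qa Aj Q F G cD cA by (simp add: cs fs qd)
      also have "\<dots> = Comp D j (amap G (Comp A q (\<epsilon> (omap F Y))))"
        using eps_nat[OF adj, of q] qa qd by simp
      also have "\<dots> = Comp D j (Comp D (amap G q) (amap G (\<epsilon> (omap F Y))))"
        using j jd qa Aj Q F G cD cA FY by (simp add: cs fs qd)
      also have "\<dots> = Comp D y (amap G (\<epsilon> (omap F Y)))"
        by (rule reassoc) (use j jd qa Aj Q F G cD cA FY in \<open>auto simp: cs fs qd\<close>)
      also have "\<dots> = Comp D y (amap G (amap F y))" using wy by (simp add: adj_mult_def)
      also have "\<dots> = Comp D (Comp D y (amap G (amap F j))) (amap G (amap F (amap G q)))"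
        using j jd qa Aj Q F G cD cA FY wy by (simp add: cs fs qd fun_comp[OF F, symmetric] fun_comp[OF G, symmetric])
      finally show "Comp D (Comp D j (amap G (\<epsilon> (Cod A q)))) (amap G (amap F (amap G q))) =
          Comp D (Comp D y (amap G (amap F j))) (amap G (amap F (amap G q)))" .
    qed (use j jd \<sigma> qa Aj Q F G cD cA FY wy GQ in \<open>simp_all add: cs fs qd\<close>)
    have arr: "(omap ?K (Cod A q), j, (Y, y)) \<in> Arr ?E"
      using jm j jd comparison_obj[OF adj Q] W unfolding EM_tcat by (simp add: hom_def)
    have GF: "is_functor D D (comp_functor G F)" by (rule is_functor_comp[OF F G])
    have "iso ?E (omap ?K (Cod A q), j, (Y, y))"
      unfolding EM_tcat by (rule tcat_iso[OF cD GF tob_EM arr[unfolded EM_tcat] ji])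
    then show "\<exists>X\<in>Obj A. \<exists>i. i \<in> hom ?E (omap ?K X) W \<and> iso ?E i"
      using Q arr W by (intro bexI[of _ "Cod A q"] exI[of _ "(omap ?K (Cod A q), j, (Y, y))"]) (auto simp: hom_def EM_tcat)
  qed
  show ?thesis by (rule ff_equiv[OF K faithful full es])
qed



lemmas fs0 = fun_obj fun_arr fun_dom fun_cod fun_id

lemma fun_eq2: assumes F: "is_functor C D F" and "f \<in> Arr C" "g \<in> Arr C" "f' \<in> Arr C" "g' \<in> Arr C"
  "Cod C f = Dom C g" "Cod C f' = Dom C g'" "Comp C g f = Comp C g' f'"
  shows "Comp D (amap F g) (amap F f) = Comp D (amap F g') (amap F f')"
  using assms fun_comp[OF F] by metis

lemma fun_eq_id: assumes F: "is_functor C D F" and "f \<in> Arr C" "g \<in> Arr C"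
  "Cod C f = Dom C g" "Comp C g f = Id C X" "X \<in> Obj C"
  shows "Comp D (amap F g) (amap F f) = Id D (omap F X)"
  using assms fun_comp[OF F] fun_id[OF F] by metis

lemma adj_comp:
  assumes a1: "adjunction C D F G \<eta> \<epsilon>" and a2: "adjunction A C P U \<iota> \<kappa>"
  shows "adjunction A D (comp_functor P F) (comp_functor G U)
     (\<lambda>X. Comp D (amap G (\<iota> (omap F X))) (\<eta> X))
     (\<lambda>B. Comp A (\<kappa> B) (amap P (\<epsilon> (omap U B))))"
proof -
  note A1 = adjs[OF a1] and A2 = adjs[OF a2]
  have cA: "category A" and cC: "category C" and cD: "category D" using A1 A2 by auto
  have F: "is_functor D C F" and G: "is_functor C D G" and P: "is_functor C A P" and U: "is_functor A C U"
    using A1 A2 by auto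
  have PF: "is_functor D A (comp_functor P F)" by (rule is_functor_comp[OF F P])
  have GU: "is_functor A D (comp_functor G U)" by (rule is_functor_comp[OF U G])
  define \<eta>' where "\<eta>' X = Comp D (amap G (\<iota> (omap F X))) (\<eta> X)" for X
  define \<epsilon>' where "\<epsilon>' B = Comp A (\<kappa> B) (amap P (\<epsilon> (omap U B)))" for B
  note simps = A1 A2 cA cC cD F G P U
  have e1: "nat_trans D D (id_functor D) (comp_functor (comp_functor G U) (comp_functor P F)) \<eta>'"
    unfolding nat_trans_def
  proof (intro conjI ballI is_functor_id cD is_functor_comp[OF PF GU])
    fix X assume "X \<in> Obj D" then show "\<eta>' X \<in> hom D (omap (id_functor D) X) (omap (comp_functor (comp_functor G U) (comp_functor P F)) X)"
      unfolding \<eta>'_def using simps by (simp add: cs fs hom_def)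
  next
    fix f assume f: "f \<in> Arr D"
    have "Comp D (\<eta>' (Cod D f)) f = Comp D (amap G (\<iota> (omap F (Cod D f)))) (Comp D (amap G (amap F f)) (\<eta> (Dom D f)))"
      unfolding \<eta>'_def using simps f eta_nat[OF a1 f] by (simp add: cs fs hom_def)
    also have "\<dots> = Comp D (amap G (amap U (amap P (amap F f)))) (Comp D (amap G (\<iota> (omap F (Dom D f)))) (\<eta> (Dom D f)))"
    proof (rule reassoc_eq)
      show "Comp D (amap G (\<iota> (omap F (Cod D f)))) (amap G (amap F f)) =
        Comp D (amap G (amap U (amap P (amap F f)))) (amap G (\<iota> (omap F (Dom D f))))"
        using simps f eta_nat[OF a2, of "amap F f"] by (simp add: cs fs0 fun_comp[OF G, symmetric])
    qed (use f simps in \<open>auto simp: cs fs\<close>)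
    finally show "Comp D (\<eta>' (Cod D f)) (amap (id_functor D) f) =
       Comp D (amap (comp_functor (comp_functor G U) (comp_functor P F)) f) (\<eta>' (Dom D f))"
      unfolding \<eta>'_def by simp
  qed
  have e2: "nat_trans A A (comp_functor (comp_functor P F) (comp_functor G U)) (id_functor A) \<epsilon>'"
    unfolding nat_trans_def
  proof (intro conjI ballI is_functor_id cA is_functor_comp[OF GU PF])
    fix X assume "X \<in> Obj A" then show "\<epsilon>' X \<in> hom A (omap (comp_functor (comp_functor P F) (comp_functor G U)) X) (omap (id_functor A) X)"
      unfolding \<epsilon>'_def using simps by (simp add: cs fs hom_def)
  next
    fix k assume k: "k \<in> Arr A"
    have "Comp A (\<epsilon>' (Cod A k)) (amap P (amap F (amap G (amap U k)))) =
        Comp A (\<kappa> (Cod A k)) (Comp A (amap P (\<epsilon> (omap U (Cod A k)))) (amap P (amap F (amap G (amap U k)))))"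
      unfolding \<epsilon>'_def using simps k by (simp add: cs fs)
    also have "\<dots> = Comp A (\<kappa> (Cod A k)) (Comp A (amap P (amap U k)) (amap P (\<epsilon> (omap U (Dom A k)))))"
      using simps k eps_nat[OF a1, of "amap U k"] by (intro arg_cong[where f="Comp A (\<kappa> (Cod A k))"] fun_eq2[OF P])
        (auto simp: cs fs)
    also have "\<dots> = Comp A k (\<epsilon>' (Dom A k))"
      unfolding \<epsilon>'_def using simps k eps_nat[OF a2 k] by (intro reassoc_eq) (auto simp: cs fs)
    finally show "Comp A (\<epsilon>' (Cod A k)) (amap (comp_functor (comp_functor P F) (comp_functor G U)) k) =
      Comp A (amap (id_functor A) k) (\<epsilon>' (Dom A k))" by simp
  qed
  have t1: "Comp A (\<epsilon>' (omap (comp_functor P F) X)) (amap (comp_functor P F) (\<eta>' X)) = Id A (omap (comp_functor P F) X)"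
    if X: "X \<in> Obj D" for X
  proof -
    have FX: "omap F X \<in> Obj C" using simps X by (simp add: cs fs)
    have "Comp A (\<epsilon>' (omap (comp_functor P F) X)) (amap (comp_functor P F) (\<eta>' X)) =
      Comp A (\<kappa> (omap P (omap F X))) (Comp A (amap P (\<epsilon> (omap U (omap P (omap F X)))))
         (Comp A (amap P (amap F (amap G (\<iota> (omap F X))))) (amap P (amap F (\<eta> X)))))"
      unfolding \<epsilon>'_def \<eta>'_def using simps X FX by (simp add: cs fs)
    also have "\<dots> = Comp A (\<kappa> (omap P (omap F X))) (Comp A (amap P (\<iota> (omap F X)))
         (Comp A (amap P (\<epsilon> (omap F X))) (amap P (amap F (\<eta> X)))))"
      using simps X FX eps_nat[OF a1, of "\<iota> (omap F X)"] by (intro arg_cong[where f="Comp A (\<kappa> (omap P (omap F X)))"] reassoc_eq fun_eq2[OF P])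
        (auto simp: cs fs)
    also have "\<dots> = Comp A (\<kappa> (omap P (omap F X))) (amap P (\<iota> (omap F X)))"
      using simps X FX fun_eq_id[OF P, of "amap F (\<eta> X)" "\<epsilon> (omap F X)" "omap F X"] adj_tri1[OF a1 X]
      by (simp add: cs fs0)
    also have "\<dots> = Id A (omap (comp_functor P F) X)"
      using simps X FX adj_tri1[OF a2 FX] by (simp add: cs fs)
    finally show ?thesis .
  qed
  have t2: "Comp D (amap (comp_functor G U) (\<epsilon>' Y)) (\<eta>' (omap (comp_functor G U) Y)) = Id D (omap (comp_functor G U) Y)"
    if Y: "Y \<in> Obj A" for Y
  proof -
    have UY: "omap U Y \<in> Obj C" using simps Y by (simp add: cs fs)
    have "Comp D (amap (comp_functor G U) (\<epsilon>' Y)) (\<eta>' (omap (comp_functor G U) Y)) =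
      Comp D (amap G (amap U (\<kappa> Y))) (Comp D (amap G (amap U (amap P (\<epsilon> (omap U Y)))))
        (Comp D (amap G (\<iota> (omap F (omap G (omap U Y))))) (\<eta> (omap G (omap U Y)))))"
      unfolding \<epsilon>'_def \<eta>'_def using simps Y UY by (simp add: cs fs)
    also have "\<dots> = Comp D (amap G (amap U (\<kappa> Y))) (Comp D (amap G (\<iota> (omap U Y)))
        (Comp D (amap G (\<epsilon> (omap U Y))) (\<eta> (omap G (omap U Y)))))"
      using simps Y UY eta_nat[OF a2, of "\<epsilon> (omap U Y)"]
      by (intro arg_cong[where f="Comp D (amap G (amap U (\<kappa> Y)))"] reassoc_eq fun_eq2[OF G])
        (auto simp: cs fs)
    also have "\<dots> = Comp D (amap G (amap U (\<kappa> Y))) (amap G (\<iota> (omap U Y)))"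
      using simps Y UY adj_tri2[OF a1 UY] by (simp add: cs fs)
    also have "\<dots> = Id D (omap (comp_functor G U) Y)"
      using simps Y UY fun_eq_id[OF G, of "\<iota> (omap U Y)" "amap U (\<kappa> Y)" "omap U Y"] adj_tri2[OF a2 Y]
      by (simp add: cs fs0)
    finally show ?thesis .
  qed
  show ?thesis unfolding adjunction_def using PF GU e1 e2 t1 t2 unfolding \<eta>'_def \<epsilon>'_def by blast
qed



lemma ff_reflect_coeq: assumes K: "is_functor A B K" and fK: "faithful A B K" and uK: "full A B K"
  and f: "f \<in> Arr A" and g: "g \<in> Arr A" and fg: "Dom A f = Dom A g" "Cod A f = Cod A g"
  and q: "q \<in> Arr A" "Dom A q = Cod A f"
  and Kq: "coequalizer B (amap K f) (amap K g) (amap K q)"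
  shows "coequalizer A f g q"
proof -
  have cA: "category A" and cB: "category B" using K by (auto dest: fun_cat1 fun_cat2)
  note ka = coeq_arrs[OF Kq]
  have qfg: "Comp A q f = Comp A q g"
    using faithfulD[OF fK, of "Comp A q f" "Comp A q g"] f g fg q ka K cA by (simp add: cs fs)
  show ?thesis unfolding coequalizer_def
  proof (intro conjI ballI impI f g fg q qfg)
    fix h assume h: "h \<in> Arr A" "Dom A h = Cod A f \<and> Comp A h f = Comp A h g"
    have "Comp B (amap K h) (amap K f) = Comp B (amap K h) (amap K g)"
      using h f g fg K by (metis fun_comp)
    then obtain u' where u': "u' \<in> Arr B" "Dom B u' = Cod B (amap K q)" "Cod B u' = Cod B (amap K h)"
      "Comp B u' (amap K q) = amap K h"
      using coeq_factor[OF Kq, of "amap K h"] h f K by (auto simp: fs)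
    have d: "Cod A q \<in> Obj A" "Cod A h \<in> Obj A" using q h cA by (simp_all add: cs)
    obtain u where u: "u \<in> hom A (Cod A q) (Cod A h)" "amap K u = u'"
      using fullD[OF uK d, of u'] u' q h K by (auto simp: hom_def fs)
    have uq: "Comp A u q = h"
      using faithfulD[OF fK, of "Comp A u q" h] u u' q h K cA fg by (auto simp: hom_def fs cs)
    show "\<exists>!u. u \<in> hom A (Cod A q) (Cod A h) \<and> Comp A u q = h"
    proof (intro ex1I[of _ u] conjI u(1) uq)
      fix v assume v: "v \<in> hom A (Cod A q) (Cod A h) \<and> Comp A v q = h"
      have "amap K v = amap K u"
      proof (rule coeq_epi[OF cB Kq])
        show "Comp B (amap K v) (amap K q) = Comp B (amap K u) (amap K q)"
          using v uq u q K by (metis fun_comp hom_iff)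
      qed (use v u q K in \<open>auto simp: hom_def fs\<close>)
      then show "v = u" using faithfulD[OF fK, of v u] u v by (auto simp: hom_def)
    qed
  qed
qed

lemma monadic_reflects_iso: assumes m: "monadic C D G" and f: "f \<in> Arr C" and i: "iso D (amap G f)"
  shows "iso C f"
proof -
  obtain F \<eta> \<epsilon> where adj: "adjunction C D F G \<eta> \<epsilon>"
    and eq: "equivalence C (EM_cat D (comp_functor G F) \<eta> (adj_mult F G \<epsilon>)) (comparison C G \<epsilon>)"
    using m unfolding monadic_def by blast
  note Aj = adjs[OF adj]
  have K: "is_functor C (EM_cat D (comp_functor G F) \<eta> (adj_mult F G \<epsilon>)) (comparison C G \<epsilon>)"
    by (rule comparison_functor[OF adj])
  have GF: "is_functor D D (comp_functor G F)" using Aj by (blast intro: is_functor_comp)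
  have "amap (comparison C G \<epsilon>) f \<in> Arr (EM_cat D (comp_functor G F) \<eta> (adj_mult F G \<epsilon>))"
    by (rule fun_arr[OF K f])
  then have "iso (EM_cat D (comp_functor G F) \<eta> (adj_mult F G \<epsilon>)) (amap (comparison C G \<epsilon>) f)"
    unfolding EM_tcat comparison_amap by (rule tcat_iso[OF adj_D[OF adj] GF tob_EM _ i])
  then show ?thesis using ff_reflects_iso[OF K equiv_ff(1)[OF eq] equiv_ff(2)[OF eq] f] by blast
qed

lemma monadic_split:
  assumes m: "monadic C D G"
  and f: "f \<in> hom C Xs Xt" and g: "g \<in> hom C Xs Xt" and e: "e \<in> hom D (omap G Xt) Y"
  and s: "s \<in> hom D Y (omap G Xt)" and t: "t \<in> hom D (omap G Xt) (omap G Xs)"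
  and ef: "Comp D e (amap G f) = Comp D e (amap G g)" and es: "Comp D e s = Id D Y"
  and gt: "Comp D (amap G g) t = Id D (omap G Xt)" and ft: "Comp D (amap G f) t = Comp D s e"
  shows "\<exists>q. coequalizer C f g q \<and> coequalizer D (amap G f) (amap G g) (amap G q)"
proof -
  obtain F \<eta> \<epsilon> where adj: "adjunction C D F G \<eta> \<epsilon>"
    and eq0: "equivalence C (EM_cat D (comp_functor G F) \<eta> (adj_mult F G \<epsilon>)) (comparison C G \<epsilon>)"
    using m unfolding monadic_def by blast
  note Aj = adjs[OF adj]
  have cC: "category C" and cD: "category D" and F: "is_functor D C F" and G: "is_functor C D G" using Aj by auto
  have T: "is_functor D D (comp_functor G F)" by (rule is_functor_comp[OF F G])
  have TT: "is_functor D D (comp_functor (comp_functor G F) (comp_functor G F))" by (rule is_functor_comp[OF T T])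
  let ?Ob = "EMOb D (comp_functor G F) \<eta> (adj_mult F G \<epsilon>)"
  let ?E = "tcat ?Ob D (comp_functor G F)"
  let ?K = "comparison C G \<epsilon>"
  have eq: "equivalence C ?E ?K" using eq0 unfolding EM_tcat .
  have K: "is_functor C ?E ?K" using comparison_functor[OF adj] unfolding EM_tcat .
  have cE: "category ?E" by (rule tcat_category[OF cD T tob_EM])
  note fK = equiv_ff(1)[OF eq] and uK = equiv_ff(2)[OF eq] and eK = equiv_ff(3)[OF eq]
  have fa: "f \<in> Arr C" "Dom C f = Xs" "Cod C f = Xt" using f by (auto simp: hom_def)
  have ga: "g \<in> Arr C" "Dom C g = Xs" "Cod C g = Xt" using g by (auto simp: hom_def)
  have ea: "e \<in> Arr D" "Dom D e = omap G Xt" "Cod D e = Y" using e by (auto simp: hom_def)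
  have sa: "s \<in> Arr D" "Dom D s = Y" "Cod D s = omap G Xt" using s by (auto simp: hom_def)
  have ta: "t \<in> Arr D" "Dom D t = omap G Xt" "Cod D t = omap G Xs" using t by (auto simp: hom_def)
  have Xs: "Xs \<in> Obj C" and Xt: "Xt \<in> Obj C" using fa cC by (metis cs)+
  have Y: "Y \<in> Obj D" using ea cD by (metis cs)
  have GXt: "omap G Xt \<in> Obj D" and GXs: "omap G Xs \<in> Obj D" using Xt Xs G by (simp_all add: fs)
  note ar = fa ga ea sa ta Xs Xt Y GXt GXs Aj cC cD F G
  have eD: "coequalizer D (amap G f) (amap G g) e"
    by (rule split_coeq[OF cD _ _ e s t ef es gt ft]) (use ar in \<open>auto simp: hom_def fs\<close>)
  define y where "y = Comp D e (Comp D (amap G (\<epsilon> Xt)) (amap G (amap F s)))"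
  have ya: "y \<in> Arr D" "Dom D y = omap G (omap F Y)" "Cod D y = Y"
    unfolding y_def using ar by (simp_all add: cs fs)
  have E1: "Comp D (amap G (amap F s)) (amap G (amap F e)) = Comp D (amap G (amap F (amap G f))) (amap G (amap F t))"
    using fun_eq2[OF T, of e s t "amap G f"] ar ft by (simp add: fs)
  have E2: "Comp D (amap G (\<epsilon> Xt)) (amap G (amap F (amap G h))) = Comp D (amap G h) (amap G (\<epsilon> Xs))"
    if h: "h \<in> hom C Xs Xt" for h
    using fun_eq2[OF G, of "amap F (amap G h)" "\<epsilon> Xt" "\<epsilon> Xs" h] eps_nat[OF adj, of h] h ar
    by (simp add: fs hom_def)
  have E3: "Comp D (amap G (amap F (amap G g))) (amap G (amap F t)) = Id D (omap G (omap F (omap G Xt)))"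
    using fun_eq_id[OF T, of t "amap G g" "omap G Xt"] ar gt by (simp add: fs)
  have "Comp D y (amap G (amap F e)) = Comp D e (Comp D (amap G (\<epsilon> Xt)) (Comp D (amap G (amap F s)) (amap G (amap F e))))"
    unfolding y_def using ar by (simp add: cs fs)
  also have "\<dots> = Comp D e (Comp D (amap G (\<epsilon> Xt)) (Comp D (amap G (amap F (amap G f))) (amap G (amap F t))))"
    using E1 by simp
  also have "\<dots> = Comp D e (Comp D (amap G f) (Comp D (amap G (\<epsilon> Xs)) (amap G (amap F t))))"
    using E2[OF f] ar by (intro arg_cong[where f="Comp D e"] reassoc_eq) (auto simp: cs fs)
  also have "\<dots> = Comp D e (Comp D (amap G g) (Comp D (amap G (\<epsilon> Xs)) (amap G (amap F t))))"
    using ef ar by (intro reassoc_eq) (auto simp: cs fs)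
  also have "\<dots> = Comp D e (Comp D (amap G (\<epsilon> Xt)) (Comp D (amap G (amap F (amap G g))) (amap G (amap F t))))"
    using E2[OF g] ar by (intro arg_cong[where f="Comp D e"] reassoc_eq) (auto simp: cs fs)
  also have "\<dots> = Comp D e (amap G (\<epsilon> Xt))"
    using E3 ar by (simp add: cs fs)
  finally have eEM: "Comp D e (amap G (\<epsilon> Xt)) = Comp D y (amap G (amap F e))" by simp
  have unit: "Comp D y (\<eta> Y) = Id D Y"
  proof -
    have "Comp D y (\<eta> Y) = Comp D e (Comp D (amap G (\<epsilon> Xt)) (Comp D (amap G (amap F s)) (\<eta> Y)))"
      unfolding y_def using ar by (simp add: cs fs)
    also have "\<dots> = Comp D e (Comp D (amap G (\<epsilon> Xt)) (Comp D (\<eta> (omap G Xt)) s))"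
      using eta_nat[OF adj sa(1)] sa by simp
    also have "\<dots> = Comp D e s"
      using adj_tri2[OF adj Xt] ar by (intro arg_cong[where f="Comp D e"] reassoc_id) (auto simp: cs fs)
    finally show ?thesis using es by simp
  qed
  have cXt: "Comp D (amap G (\<epsilon> Xt)) (amap G (amap F (amap G (\<epsilon> Xt)))) = Comp D (amap G (\<epsilon> Xt)) (amap G (\<epsilon> (omap F (omap G Xt))))"
    using comparison_obj[OF adj Xt] by (simp add: EMOb_def adj_mult_def)
  have E4: "Comp D (amap G (amap F y)) (amap G (amap F (amap G (amap F e)))) = Comp D (amap G (amap F e)) (amap G (amap F (amap G (\<epsilon> Xt))))"
    using fun_eq2[OF T, of "amap G (amap F e)" y "amap G (\<epsilon> Xt)" e] eEM ar ya by (simp add: fs cs)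
  have E5: "Comp D (amap G (\<epsilon> (omap F Y))) (amap G (amap F (amap G (amap F e)))) = Comp D (amap G (amap F e)) (amap G (\<epsilon> (omap F (omap G Xt))))"
    using fun_eq2[OF G, of "amap F (amap G (amap F e))" "\<epsilon> (omap F Y)" "\<epsilon> (omap F (omap G Xt))" "amap F e"]
      eps_nat[OF adj, of "amap F e"] ar by (simp add: fs cs)
  have assoc: "Comp D y (amap G (amap F y)) = Comp D y (amap G (\<epsilon> (omap F Y)))"
  proof (rule split_epi_cancel[OF cD, of "amap G (amap F (amap G (amap F e)))" "amap G (amap F (amap G (amap F s)))"])
    show "Comp D (amap G (amap F (amap G (amap F e)))) (amap G (amap F (amap G (amap F s)))) =
      Id D (Cod D (amap G (amap F (amap G (amap F e)))))"
      using fun_eq_id[OF TT, of s e Y] ar es by (simp add: fs)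
    have "Comp D (Comp D y (amap G (amap F y))) (amap G (amap F (amap G (amap F e)))) =
       Comp D y (Comp D (amap G (amap F e)) (amap G (amap F (amap G (\<epsilon> Xt)))))"
      using E4 ar ya by (simp add: cs fs)
    also have "\<dots> = Comp D e (Comp D (amap G (\<epsilon> Xt)) (amap G (amap F (amap G (\<epsilon> Xt)))))"
      using eEM[symmetric] ar ya by (intro reassoc_eq) (auto simp: cs fs)
    also have "\<dots> = Comp D e (Comp D (amap G (\<epsilon> Xt)) (amap G (\<epsilon> (omap F (omap G Xt)))))"
      using cXt by simp
    also have "\<dots> = Comp D y (Comp D (amap G (amap F e)) (amap G (\<epsilon> (omap F (omap G Xt)))))"
      using eEM ar ya by (intro reassoc_eq) (auto simp: cs fs)
    also have "\<dots> = Comp D (Comp D y (amap G (\<epsilon> (omap F Y)))) (amap G (amap F (amap G (amap F e))))"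
      using E5 ar ya by (simp add: cs fs)
    finally show "Comp D (Comp D y (amap G (amap F y))) (amap G (amap F (amap G (amap F e)))) =
      Comp D (Comp D y (amap G (\<epsilon> (omap F Y)))) (amap G (amap F (amap G (amap F e))))" .
  qed (use ar ya in \<open>simp_all add: cs fs\<close>)
  have Wob: "(Y, y) \<in> ?Ob"
    using unit assoc ya Y by (simp add: EMOb_def hom_def adj_mult_def)
  have KXt: "omap ?K Xt \<in> ?Ob" using comparison_obj[OF adj Xt] by simp
  let ?eE = "(omap ?K Xt, e, (Y, y))"
  have eE: "?eE \<in> Arr ?E" using KXt Wob e eEM by simp
  have Kf: "amap ?K f = (omap ?K Xs, amap G f, omap ?K Xt)" and Kg: "amap ?K g = (omap ?K Xs, amap G g, omap ?K Xt)"
    using fa ga by simp_all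
  have Kfa: "amap ?K f \<in> Arr ?E" "amap ?K g \<in> Arr ?E" using fun_arr[OF K fa(1)] fun_arr[OF K ga(1)] by simp_all
  have coeqE: "coequalizer ?E (amap ?K f) (amap ?K g) ?eE"
    unfolding coequalizer_def
  proof (intro conjI ballI impI Kfa eE)
    show "Dom ?E (amap ?K f) = Dom ?E (amap ?K g)" "Cod ?E (amap ?K f) = Cod ?E (amap ?K g)"
      "Dom ?E ?eE = Cod ?E (amap ?K f)" using Kf Kg by simp_all
    show "Comp ?E ?eE (amap ?K f) = Comp ?E ?eE (amap ?K g)" using Kf Kg ef by simp
  next
    fix h assume h: "h \<in> Arr ?E" "Dom ?E h = Cod ?E (amap ?K f) \<and> Comp ?E h (amap ?K f) = Comp ?E h (amap ?K g)"
    obtain a h0 Wo w where hh: "h = (a, h0, (Wo, w))" by (cases h) auto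
    have a: "a = omap ?K Xt" using h hh Kf by simp
    have W: "(Wo, w) \<in> ?Ob" and h0: "h0 \<in> Arr D" "Dom D h0 = omap G Xt" "Cod D h0 = Wo"
      and hEM: "Comp D h0 (amap G (\<epsilon> Xt)) = Comp D w (amap G (amap F h0))"
      using h(1) hh a by (auto simp: hom_def)
    have wa: "Wo \<in> Obj D" "w \<in> Arr D" "Dom D w = omap G (omap F Wo)" "Cod D w = Wo"
      using W by (auto simp: EMOb_def hom_def)
    have hfg: "Comp D h0 (amap G f) = Comp D h0 (amap G g)" using h(2) hh Kf Kg by simp
    obtain u0 where u0: "u0 \<in> Arr D" "Dom D u0 = Y" "Cod D u0 = Wo" "Comp D u0 e = h0"
      using coeq_factor[OF eD, of h0] h0 hfg ar by (auto simp: fs)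
    have u0EM: "Comp D u0 y = Comp D w (amap G (amap F u0))"
    proof (rule split_epi_cancel[OF cD, of "amap G (amap F e)" "amap G (amap F s)"])
      show "Comp D (amap G (amap F e)) (amap G (amap F s)) = Id D (Cod D (amap G (amap F e)))"
        using fun_eq_id[OF T, of s e Y] ar es by (simp add: fs)
      have "Comp D (Comp D u0 y) (amap G (amap F e)) = Comp D u0 (Comp D y (amap G (amap F e)))"
        using u0 ya ar by (simp add: cs fs)
      also have "\<dots> = Comp D u0 (Comp D e (amap G (\<epsilon> Xt)))" using eEM by simp
      also have "\<dots> = Comp D h0 (amap G (\<epsilon> Xt))"
        by (rule reassoc) (use u0 ar in \<open>auto simp: cs fs\<close>)
      also have "\<dots> = Comp D w (amap G (amap F (Comp D u0 e)))" using hEM u0 by simp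
      also have "\<dots> = Comp D (Comp D w (amap G (amap F u0))) (amap G (amap F e))"
        using u0(1-3) ar wa by (simp add: cs fs)
      finally show "Comp D (Comp D u0 y) (amap G (amap F e)) = Comp D (Comp D w (amap G (amap F u0))) (amap G (amap F e))" .
    qed (use u0 ar ya wa in \<open>simp_all add: cs fs\<close>)
    let ?u = "((Y, y), u0, (Wo, w))"
    show "\<exists>!u. u \<in> hom ?E (Cod ?E ?eE) (Cod ?E h) \<and> Comp ?E u ?eE = h"
    proof (rule ex1I[of _ ?u])
      show "?u \<in> hom ?E (Cod ?E ?eE) (Cod ?E h) \<and> Comp ?E ?u ?eE = h"
        using Wob W u0 u0EM hh a by (simp add: hom_def)
    next
      fix v assume v: "v \<in> hom ?E (Cod ?E ?eE) (Cod ?E h) \<and> Comp ?E v ?eE = h"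
      obtain b v0 c where vv: "v = (b, v0, c)" by (cases v) auto
      have bc: "b = (Y, y)" "c = (Wo, w)" and v0: "v0 \<in> Arr D" "Dom D v0 = Y" "Cod D v0 = Wo"
        and v0e: "Comp D v0 e = h0"
        using v vv hh by (auto simp: hom_def)
      have "v0 = u0" by (rule coeq_epi[OF cD eD]) (use v0 v0e u0 ea in auto)
      then show "v = ?u" using vv bc by simp
    qed
  qed
  obtain Z i where Z: "Z \<in> Obj C" and i: "i \<in> hom ?E (omap ?K Z) (Y, y)" and ii: "iso ?E i"
    using eK Wob unfolding esurj_def by auto
  obtain j where j: "j \<in> hom ?E (Y, y) (omap ?K Z)" and ji: "Comp ?E j i = Id ?E (omap ?K Z)"
    and ij: "Comp ?E i j = Id ?E (Y, y)"
    using ii i unfolding iso_def by (auto simp: hom_def)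
  obtain i0 where i0: "i = (omap ?K Z, i0, (Y, y))" using i by (cases i) (auto simp: hom_def)
  obtain j0 where j0: "j = ((Y, y), j0, omap ?K Z)" using j by (cases j) (auto simp: hom_def)
  have i0a: "i0 \<in> Arr D" "Dom D i0 = omap G Z" "Cod D i0 = Y" using i i0 by (auto simp: hom_def)
  have j0a: "j0 \<in> Arr D" "Dom D j0 = Y" "Cod D j0 = omap G Z" using j j0 by (auto simp: hom_def)
  have j0i0: "Comp D j0 i0 = Id D (omap G Z)" and i0j0: "Comp D i0 j0 = Id D Y"
    using ji ij i0 j0 by simp_all
  have jiso: "iso ?E j" using i j ji ij i0 j0 by (intro isoI[of _ _ i]) (auto simp: hom_def)
  have j0iso: "iso D j0" using i0a j0a j0i0 i0j0 by (intro isoI[of _ _ i0]) auto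
  have coeqE': "coequalizer ?E (amap ?K f) (amap ?K g) (Comp ?E j ?eE)"
    by (rule coeq_iso[OF cE coeqE jiso]) (use j0 in simp)
  have e'h: "Comp ?E j ?eE \<in> hom ?E (omap ?K Xt) (omap ?K Z)"
    using fun_arr[OF K] coeq_arrs[OF coeqE'] j0 j0a ea by (auto simp: hom_def)
  obtain q where q: "q \<in> hom C Xt Z" and Kq: "amap ?K q = Comp ?E j ?eE"
    using fullD[OF uK Xt Z e'h] by blast
  have qa: "q \<in> Arr C" "Dom C q = Xt" "Cod C q = Z" using q by (auto simp: hom_def)
  have Gq: "amap G q = Comp D j0 e" using Kq j0 qa by simp
  have "coequalizer C f g q"
    by (rule ff_reflect_coeq[OF K fK uK fa(1) ga(1)]) (use fa ga qa coeqE' Kq in auto)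
  moreover have "coequalizer D (amap G f) (amap G g) (amap G q)"
    unfolding Gq by (rule coeq_iso[OF cD eD j0iso]) (use j0a ea in simp)
  ultimately show ?thesis by blast
qed



lemma alg_lift:
  assumes c: "category C" and T: "is_functor C C T" and pr: "preserves_reflexive_coequalizers C C T"
  and f: "(A, f0, B) \<in> Arr (Alg_cat C T)" and g: "(A, g0, B) \<in> Arr (Alg_cat C T)"
  and rp: "reflexive_pair C f0 g0" and q: "coequalizer C f0 g0 q0"
  shows "\<exists>cc. coequalizer (Alg_cat C T) (A, f0, B) (A, g0, B) (B, q0, (Cod C q0, cc))"
proof -
  let ?Ob = "{(X, a). X \<in> Obj C \<and> a \<in> hom C (omap T X) X}"
  let ?Al = "tcat ?Ob C T"
  obtain Ao a Bo b where AB: "A = (Ao, a)" "B = (Bo, b)" by (cases A, cases B) auto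
  have fA: "f0 \<in> Arr C" "Dom C f0 = Ao" "Cod C f0 = Bo" "Comp C f0 a = Comp C b (amap T f0)"
    and gA: "g0 \<in> Arr C" "Dom C g0 = Ao" "Cod C g0 = Bo" "Comp C g0 a = Comp C b (amap T g0)"
    and Ao: "Ao \<in> Obj C" "a \<in> Arr C" "Dom C a = omap T Ao" "Cod C a = Ao"
    and Bo: "Bo \<in> Obj C" "b \<in> Arr C" "Dom C b = omap T Bo" "Cod C b = Bo"
    using f g AB unfolding Alg_tcat by (auto simp: hom_def)
  have Tq: "coequalizer C (amap T f0) (amap T g0) (amap T q0)"
    using pr rp q unfolding preserves_reflexive_coequalizers_def by blast
  note qa = coeq_arrs[OF q] and Tqa = coeq_arrs[OF Tq]
  have qd: "Dom C q0 = Bo" using qa fA by simp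
  let ?Z = "Cod C q0"
  have Z: "?Z \<in> Obj C" using qa c by (simp add: cs)
  note ar = fA gA Ao Bo qa qd Z c T
  let ?r = "Comp C q0 b"
  have r: "?r \<in> Arr C" "Dom C ?r = omap T Bo" "Cod C ?r = ?Z" using ar by (simp_all add: cs)
  note base = fA(1-3) gA(1-3) Ao Bo qa(1-6) qd Z c T
  have "Comp C ?r (amap T f0) = Comp C q0 (Comp C b (amap T f0))" using base by (simp add: cs fs)
  also have "\<dots> = Comp C q0 (Comp C f0 a)" using fA(4) by simp
  also have "\<dots> = Comp C q0 (Comp C g0 a)"
    using base qa(7) by (intro reassoc_eq) (auto simp: cs fs)
  also have "\<dots> = Comp C q0 (Comp C b (amap T g0))" using gA(4) by simp
  also have "\<dots> = Comp C ?r (amap T g0)" using base by (simp add: cs fs)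
  finally have rfg: "Comp C ?r (amap T f0) = Comp C ?r (amap T g0)" .
  obtain cc where cc: "cc \<in> Arr C" "Dom C cc = Cod C (amap T q0)" "Cod C cc = ?Z" "Comp C cc (amap T q0) = ?r"
    using coeq_factor[OF Tq, of ?r] r rfg ar by (auto simp: fs)
  have ccd: "Dom C cc = omap T ?Z" using cc ar by (simp add: fs)
  have ZO: "(?Z, cc) \<in> ?Ob" using Z cc ccd by (simp add: hom_def)
  let ?qE = "(B, q0, (?Z, cc))"
  have qE: "?qE \<in> Arr ?Al" using ZO AB ar cc by (auto simp: hom_def)
  have fE: "(A, f0, B) \<in> Arr ?Al" and gE: "(A, g0, B) \<in> Arr ?Al" using f g unfolding Alg_tcat .
  have "coequalizer ?Al (A, f0, B) (A, g0, B) ?qE"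
    unfolding coequalizer_def
  proof (intro conjI ballI impI fE gE qE)
    show "Dom ?Al (A, f0, B) = Dom ?Al (A, g0, B)" "Cod ?Al (A, f0, B) = Cod ?Al (A, g0, B)"
      "Dom ?Al ?qE = Cod ?Al (A, f0, B)" by simp_all
    show "Comp ?Al ?qE (A, f0, B) = Comp ?Al ?qE (A, g0, B)" using qa(7) by simp
  next
    fix h assume h: "h \<in> Arr ?Al" "Dom ?Al h = Cod ?Al (A, f0, B) \<and> Comp ?Al h (A, f0, B) = Comp ?Al h (A, g0, B)"
    obtain a' h0 Wo w where hh: "h = (a', h0, (Wo, w))" by (cases h) auto
    have a': "a' = B" using h hh by simp
    have W: "(Wo, w) \<in> ?Ob" and h0: "h0 \<in> Arr C" "Dom C h0 = Bo" "Cod C h0 = Wo"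
      and hA: "Comp C h0 b = Comp C w (amap T h0)"
      using h(1) hh a' AB by (auto simp: hom_def)
    have wa: "Wo \<in> Obj C" "w \<in> Arr C" "Dom C w = omap T Wo" "Cod C w = Wo"
      using W by (auto simp: hom_def)
    have hfg: "Comp C h0 f0 = Comp C h0 g0" using h(2) hh by simp
    obtain u0 where u0: "u0 \<in> Arr C" "Dom C u0 = ?Z" "Cod C u0 = Wo" "Comp C u0 q0 = h0"
      using coeq_factor[OF q, of h0] h0 hfg ar by auto
    have u0A: "Comp C u0 cc = Comp C w (amap T u0)"
    proof (rule coeq_epi[OF c Tq])
      have "Comp C (Comp C u0 cc) (amap T q0) = Comp C u0 (Comp C q0 b)"
        using u0 cc ar by (simp add: cs fs)
      also have "\<dots> = Comp C h0 b" by (rule reassoc) (use u0 ar in \<open>auto simp: cs fs\<close>)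
      also have "\<dots> = Comp C w (amap T (Comp C u0 q0))" using hA u0 by simp
      also have "\<dots> = Comp C (Comp C w (amap T u0)) (amap T q0)" using u0(1-3) ar wa by (simp add: cs fs)
      finally show "Comp C (Comp C u0 cc) (amap T q0) = Comp C (Comp C w (amap T u0)) (amap T q0)" .
    qed (use u0 cc ccd ar wa Tqa in \<open>simp_all add: cs fs\<close>)
    let ?u = "((?Z, cc), u0, (Wo, w))"
    show "\<exists>!u. u \<in> hom ?Al (Cod ?Al ?qE) (Cod ?Al h) \<and> Comp ?Al u ?qE = h"
    proof (rule ex1I[of _ ?u])
      show "?u \<in> hom ?Al (Cod ?Al ?qE) (Cod ?Al h) \<and> Comp ?Al ?u ?qE = h"
        using ZO W u0 u0A hh a' by (simp add: hom_def)
    next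
      fix v assume v: "v \<in> hom ?Al (Cod ?Al ?qE) (Cod ?Al h) \<and> Comp ?Al v ?qE = h"
      obtain b' v0 c' where vv: "v = (b', v0, c')" by (cases v) auto
      have bc: "b' = (?Z, cc)" "c' = (Wo, w)" and v0: "v0 \<in> Arr C" "Dom C v0 = ?Z" "Cod C v0 = Wo"
        and v0e: "Comp C v0 q0 = h0"
        using v vv hh by (auto simp: hom_def)
      have "v0 = u0" by (rule coeq_epi[OF c q]) (use v0 v0e u0 in auto)
      then show "v = ?u" using vv bc by simp
    qed
  qed
  then show ?thesis unfolding Alg_tcat by blast
qed



theorem theorem1p10:
  fixes C :: "('oc, 'mc) cat" and D :: "('od, 'md) cat"
    and T :: "('oc, 'mc, 'oc, 'mc) func"
    and G :: "('oc, 'mc, 'od, 'md) func"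
  assumes "category C" and "category D"
    and "varietor C T"
    and "preserves_reflexive_coequalizers C C T"
    and "monadic C D G"
  shows "monadic (Alg_cat C T) D (comp_functor G (forget C T))"
proof -
  note cC = assms(1) and cD = assms(2) and mG = assms(5) and pr = assms(4)
  obtain F \<eta> \<epsilon> where adj: "adjunction C D F G \<eta> \<epsilon>" using mG unfolding monadic_def by blast
  have Tf: "is_functor C C T" and hla: "has_left_adjoint (Alg_cat C T) C (forget C T)"
    using assms(3) unfolding varietor_def by auto
  obtain P \<iota> \<kappa> where adj2: "adjunction (Alg_cat C T) C P (forget C T) \<iota> \<kappa>"
    using hla unfolding has_left_adjoint_def by blast
  let ?Al = "Alg_cat C T"
  let ?U = "forget C T"
  let ?F' = "comp_functor P F" and ?G' = "comp_functor G ?U"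
  define \<eta>' where "\<eta>' = (\<lambda>X. Comp D (amap G (\<iota> (omap F X))) (\<eta> X))"
  define \<epsilon>' where "\<epsilon>' = (\<lambda>B. Comp ?Al (\<kappa> B) (amap P (\<epsilon> (omap ?U B))))"
  have adj': "adjunction ?Al D ?F' ?G' \<eta>' \<epsilon>'"
    unfolding \<eta>'_def \<epsilon>'_def by (rule adj_comp[OF adj adj2])
  note A' = adjs[OF adj']
  have cAl: "category ?Al" and U: "is_functor ?Al C ?U" using adjs[OF adj2] by auto
  have G: "is_functor C D G" using adjs[OF adj] by auto
  have F': "is_functor D ?Al ?F'" and G': "is_functor ?Al D ?G'" using A' by auto
  have "equivalence ?Al (EM_cat D (comp_functor ?G' ?F') \<eta>' (adj_mult ?F' ?G' \<epsilon>')) (comparison ?Al ?G' \<epsilon>')"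
  proof (rule beck[OF adj'])
    fix k assume k: "k \<in> Arr ?Al" and ik: "iso D (amap ?G' k)"
    obtain A k0 B where kk: "k = (A, k0, B)" by (cases k) auto
    have "iso C k0" using monadic_reflects_iso[OF mG, of k0] fun_arr[OF U k] ik kk by simp
    from tcat_iso[OF cC Tf tob_Alg k[unfolded kk Alg_tcat] this] show "iso ?Al k"
      unfolding kk Alg_tcat .
  next
    fix Y y assume W: "(Y, y) \<in> EMOb D (comp_functor ?G' ?F') \<eta>' (adj_mult ?F' ?G' \<epsilon>')"
    note w = EMObD[OF W]
    have wa: "Y \<in> Obj D" "y \<in> Arr D" "Dom D y = omap ?G' (omap ?F' Y)" "Cod D y = Y"
      and wu: "Comp D y (\<eta>' Y) = Id D Y"
      and wm: "Comp D y (amap ?G' (amap ?F' y)) = Comp D y (amap ?G' (\<epsilon>' (omap ?F' Y)))"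
      using w by (simp_all add: adj_mult_def)
    let ?FY = "omap ?F' Y" and ?GFY = "omap ?G' (omap ?F' Y)"
    let ?FGFY = "omap ?F' (omap ?G' (omap ?F' Y))"
    have FY: "?FY \<in> Obj ?Al" and GFY: "?GFY \<in> Obj D" and FGFY: "?FGFY \<in> Obj ?Al"
      using wa F' G' by (metis fun_obj)+
    have fAa: "amap ?F' y \<in> Arr ?Al" "Dom ?Al (amap ?F' y) = ?FGFY" "Cod ?Al (amap ?F' y) = ?FY"
      using wa F' by (metis fun_arr fun_dom fun_cod)+
    have gAa: "\<epsilon>' ?FY \<in> Arr ?Al" "Dom ?Al (\<epsilon>' ?FY) = ?FGFY" "Cod ?Al (\<epsilon>' ?FY) = ?FY"
      using FY eps_arr[OF adj'] eps_dom[OF adj'] eps_cod[OF adj'] by auto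
    have sAa: "amap ?F' (\<eta>' Y) \<in> Arr ?Al" "Dom ?Al (amap ?F' (\<eta>' Y)) = ?FY"
      "Cod ?Al (amap ?F' (\<eta>' Y)) = ?FGFY"
      using wa F' eta_arr[OF adj'] eta_dom[OF adj'] eta_cod[OF adj'] by (metis fun_arr fun_dom fun_cod)+
    have fs1: "Comp ?Al (amap ?F' y) (amap ?F' (\<eta>' Y)) = Id ?Al ?FY"
      using fun_eq_id[OF F', of "\<eta>' Y" y Y] wa wu eta_arr[OF adj'] eta_cod[OF adj'] by simp
    have gs1: "Comp ?Al (\<epsilon>' ?FY) (amap ?F' (\<eta>' Y)) = Id ?Al ?FY"
      using adj_tri1[OF adj' wa(1)] by simp
    obtain A1 f0 B1 where fd: "amap ?F' y = (A1, f0, B1)" by (cases "amap ?F' y") auto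
    obtain A2 g0 B2 where gd: "\<epsilon>' ?FY = (A2, g0, B2)" by (cases "\<epsilon>' ?FY") auto
    obtain A3 s0 B3 where sd: "amap ?F' (\<eta>' Y) = (A3, s0, B3)" by (cases "amap ?F' (\<eta>' Y)") auto
    have AB: "A1 = ?FGFY" "B1 = ?FY" "A2 = ?FGFY" "B2 = ?FY" "A3 = ?FY" "B3 = ?FGFY"
      using fAa gAa sAa fd gd sd unfolding Alg_tcat by auto
    have fA: "(A1, f0, B1) \<in> Arr ?Al" and gA: "(A1, g0, B1) \<in> Arr ?Al"
      using fAa gAa fd gd AB by auto
    have f0: "f0 = amap ?U (amap ?F' y)" and g0: "g0 = amap ?U (\<epsilon>' ?FY)" and s0: "s0 = amap ?U (amap ?F' (\<eta>' Y))"
      using fd gd sd by simp_all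
    let ?Xs = "omap ?U ?FGFY" and ?Xt = "omap ?U ?FY"
    have f0a: "f0 \<in> hom C ?Xs ?Xt" using fun_arr[OF U fAa(1)] fun_dom[OF U fAa(1)] fun_cod[OF U fAa(1)] fAa f0
      by (simp add: hom_def)
    have g0a: "g0 \<in> hom C ?Xs ?Xt" using fun_arr[OF U gAa(1)] fun_dom[OF U gAa(1)] fun_cod[OF U gAa(1)] gAa g0
      by (simp add: hom_def)
    have s0a: "s0 \<in> hom C ?Xt ?Xs" using fun_arr[OF U sAa(1)] fun_dom[OF U sAa(1)] fun_cod[OF U sAa(1)] sAa s0
      by (simp add: hom_def)
    have fs0: "Comp C f0 s0 = Id C ?Xt"
      using fun_comp[OF U sAa(1) fAa(1)] fs1 fun_id[OF U FY] f0 s0 sAa fAa by simp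
    have gs0: "Comp C g0 s0 = Id C ?Xt"
      using fun_comp[OF U sAa(1) gAa(1)] gs1 fun_id[OF U FY] g0 s0 sAa gAa by simp
    have rp: "reflexive_pair C f0 g0"
      unfolding reflexive_pair_def using f0a g0a s0a fs0 gs0 by (auto simp: hom_def)
    have GXt: "omap G ?Xt = ?GFY" and GXs: "omap G ?Xs = omap ?G' ?FGFY" by simp_all
    have ea: "y \<in> hom D (omap G ?Xt) Y" using wa by (simp add: hom_def)
    have sa: "\<eta>' Y \<in> hom D Y (omap G ?Xt)" using wa eta_arr[OF adj'] eta_dom[OF adj'] eta_cod[OF adj']
      by (simp add: hom_def)
    have ta: "\<eta>' ?GFY \<in> hom D (omap G ?Xt) (omap G ?Xs)"
      using GFY eta_arr[OF adj'] eta_dom[OF adj'] eta_cod[OF adj'] by (simp add: hom_def)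
    have Gf0: "amap G f0 = amap ?G' (amap ?F' y)" and Gg0: "amap G g0 = amap ?G' (\<epsilon>' ?FY)"
      using f0 g0 by simp_all
    have ef: "Comp D y (amap G f0) = Comp D y (amap G g0)" using wm Gf0 Gg0 by simp
    have gt: "Comp D (amap G g0) (\<eta>' ?GFY) = Id D (omap G ?Xt)"
      using adj_tri2[OF adj' FY] Gg0 by simp
    have ft: "Comp D (amap G f0) (\<eta>' ?GFY) = Comp D (\<eta>' Y) y"
      using eta_nat[OF adj' wa(2)] wa Gf0 by simp
    obtain q0 where q0: "coequalizer C f0 g0 q0" and Gq0: "coequalizer D (amap G f0) (amap G g0) (amap G q0)"
      using monadic_split[OF mG f0a g0a ea sa ta ef wu gt ft] by blast
    obtain cc where cq: "coequalizer ?Al (A1, f0, B1) (A1, g0, B1) (B1, q0, (Cod C q0, cc))"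
      using alg_lift[OF cC Tf pr fA gA rp q0] by blast
    show "\<exists>q. coequalizer ?Al (amap ?F' y) (\<epsilon>' (omap ?F' Y)) q \<and>
            coequalizer D (amap ?G' (amap ?F' y)) (amap ?G' (\<epsilon>' (omap ?F' Y))) (amap ?G' q)"
      using cq Gq0 fd gd AB Gf0 Gg0 by (intro exI[of _ "(B1, q0, (Cod C q0, cc))"]) auto
  qed
  then show ?thesis unfolding monadic_def using adj' by blast
qed


end
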